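(* Let $F$ be a nonarchimedean local field of characteristic zero with ring of integers $R$, ramification index $e$ and residue degree $f$, and let $D^R$ be the forward derivative on the weighted Hilbert space $H^R$ of the tree of balls of $R$, as defined in the context. Then $D^R$ is invertible, with bounded inverse $(D^R)^{-1}$, and $(D^R)^{-1}$ is a compact operator. Moreover, $(D^R)^{-1}$ is a Hilbert–Schmidt operator if and only if $F=\mathbb{Q}_p$.
   Context: Let $p$ be a prime and $F$ a finite extension of $\mathbb{Q}_p$, with the unique absolute value $|\cdot|$ extending the $p$-adic absolute value of $\mathbb{Q}_p$. Let $R=\{x\in F: |x|\le 1\}$, $P=\{x\in F:|x|<1\}$, $\pi$ a uniformizer (a generator of $P$), with $|\pi|=p^{-1/e}$ ($e$ the ramification index), and let $f$ be such that $R/P$ has $p^f$ elements (so $[F:\mathbb{Q}_p]=ef$). Let $S=\{s_0=0,s_1,\dots,s_{p^f-1}\}\subset R$ be a set of representatives of $R/P$ containing $0$. For $n\ge 0$ let $X_n^R=\{\sum_{k=0}^{n-1}x_k\pi^k : x_k\in S\}$ (so $X_0^R=\{0\}$ and $X_n^R$ has $p^{nf}$ elements, one in each ball of radius $p^{-n/e}$ in $R$). Let $H^R$ be the Hilbert space of sequences $\phi=(\phi_n)_{n\ge0}$ with $\phi_n:X_n^R\to\mathbb{C}$ and $\|\phi\|^2=\sum_{n\ge0}\sum_{x\in X_n^R}|\phi_n(x)|^2p^{-nf}<\infty$ (weighted $\ell^2$ on the tree of balls of $R$, weight = volume of the ball). Define $(D\phi)_n(x)=p^{n/e}\big(\phi_n(x)-p^{-f}\sum_{s\in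 S}\phi_{n+1}(x+s\pi^n)\big)$ for $x\in X_n^R$, and let $D^R$ be $D$ on its maximal domain $\{\phi\in H^R: D\phi\in H^R\}$. *)

theory Defs
  imports "HOL-Analysis.Analysis"
begin

text \<open>Combinatorial model of the tree of balls of the ring of integers R of a
local field F with residue field of cardinality q = p^f and ramification index e.
A point x = sum_{k<n} x_k pi^k of X_n^R is encoded by its digit word
[x_0, ..., x_(n-1)] (digit i stands for the representative s_i in S, with s_0 = 0),
and x + s_i pi^n is encoded by appending i.  A vector phi of H^R is a function
phi n w, which must vanish off the words of length n.\<close>

definition words :: "nat \<Rightarrow> nat \<Rightarrow> nat list set" where
  "words q n = {w. length w = n \<and> set w \<subseteq> {..<q}}"

type_synonym tvec = "nat \<Rightarrow> nat list \<Rightarrow> complex"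

definition level_sq :: "nat \<Rightarrow> nat \<Rightarrow> tvec \<Rightarrow> nat \<Rightarrow> real" where
  "level_sq p f \<phi> n = (\<Sum>w\<in>words (p^f) n. (cmod (\<phi> n w))\<^sup>2) / real p ^ (n * f)"

definition Hspace :: "nat \<Rightarrow> nat \<Rightarrow> tvec set" where
  "Hspace p f = {\<phi>. (\<forall>n w. w \<notin> words (p^f) n \<longrightarrow> \<phi> n w = 0)
                     \<and> summable (level_sq p f \<phi>)}"

definition Hnorm :: "nat \<Rightarrow> nat \<Rightarrow> tvec \<Rightarrow> real" where
  "Hnorm p f \<phi> = sqrt (\<Sum>n. level_sq p f \<phi> n)"

definition Hinner :: "nat \<Rightarrow> nat \<Rightarrow> tvec \<Rightarrow> tvec \<Rightarrow> complex" where
  "Hinner p f \<phi> \<psi> =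
     (\<Sum>n. (\<Sum>w\<in>words (p^f) n. \<phi> n w * cnj (\<psi> n w)) / of_nat (p ^ (n * f)))"

definition Dop :: "nat \<Rightarrow> nat \<Rightarrow> nat \<Rightarrow> tvec \<Rightarrow> tvec" where
  "Dop p e f \<phi> = (\<lambda>n w. if w \<in> words (p^f) n then
      complex_of_real (real p powr (real n / real e)) *
        (\<phi> n w - (\<Sum>s<p^f. \<phi> (Suc n) (w @ [s])) / of_nat (p ^ f))
      else 0)"

definition domD :: "nat \<Rightarrow> nat \<Rightarrow> nat \<Rightarrow> tvec set" where
  "domD p e f = {\<phi> \<in> Hspace p f. Dop p e f \<phi> \<in> Hspace p f}"

definition bounded_op :: "nat \<Rightarrow> nat \<Rightarrow> (tvec \<Rightarrow> tvec) \<Rightarrow> bool" where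
  "bounded_op p f T \<longleftrightarrow> (\<forall>\<psi>\<in>Hspace p f. T \<psi> \<in> Hspace p f) \<and>
     (\<exists>C. \<forall>\<psi>\<in>Hspace p f. Hnorm p f (T \<psi>) \<le> C * Hnorm p f \<psi>)"

text \<open>Compact operator: images of bounded sequences have convergent subsequences
(H^R is a metric space, so this is relative compactness of the image of the unit ball).\<close>
definition compact_op :: "nat \<Rightarrow> nat \<Rightarrow> (tvec \<Rightarrow> tvec) \<Rightarrow> bool" where
  "compact_op p f T \<longleftrightarrow> (\<forall>\<psi>::nat \<Rightarrow> tvec. (\<forall>k. \<psi> k \<in> Hspace p f) \<longrightarrow>
       (\<exists>B. \<forall>k. Hnorm p f (\<psi> k) \<le> B) \<longrightarrow>
       (\<exists>r \<phi>. strict_mono r \<and> \<phi> \<in> Hspace p f \<and>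
          (\<lambda>k. Hnorm p f (T (\<psi> (r k)) - \<phi>)) \<longlonglongrightarrow> 0))"

definition orthonormal_basis :: "nat \<Rightarrow> nat \<Rightarrow> tvec set \<Rightarrow> bool" where
  "orthonormal_basis p f B \<longleftrightarrow> B \<subseteq> Hspace p f \<and>
     (\<forall>b\<in>B. Hnorm p f b = 1) \<and>
     (\<forall>b\<in>B. \<forall>c\<in>B. b \<noteq> c \<longrightarrow> Hinner p f b c = 0) \<and>
     (\<forall>\<phi>\<in>Hspace p f. (\<forall>b\<in>B. Hinner p f \<phi> b = 0) \<longrightarrow> \<phi> = (\<lambda>n w. 0))"

definition hilbert_schmidt :: "nat \<Rightarrow> nat \<Rightarrow> (tvec \<Rightarrow> tvec) \<Rightarrow> bool" where
  "hilbert_schmidt p f T \<longleftrightarrow> (\<exists>B. orthonormal_basis p f B \<and>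
     (\<lambda>b. (Hnorm p f (T b))\<^sup>2) summable_on B)"

end

theory Submission
  imports Defs "HOL-Library.Diagonal_Subsequence"
begin


lemma words_0[simp]: "words q 0 = {[]}"
  by (auto simp: words_def)

lemma words_Suc_cons: "words q (Suc n) = (\<lambda>(s,u). s # u) ` ({..<q} \<times> words q n)"
proof -
  have "v \<in> (\<lambda>(s,u). s # u) ` ({..<q} \<times> words q n)" if "v \<in> words q (Suc n)" for v
  proof -
    from that obtain s u where "v = s # u" by (cases v) (auto simp: words_def)
    with that show ?thesis by (auto simp: words_def intro!: image_eqI[of _ _ "(s,u)"])
  qed
  thus ?thesis by (auto simp: words_def)
qed

lemma finite_words[simp]: "finite (words q n)"
  by (induction n) (auto simp: words_Suc_cons)

lemma card_words[simp]: "card (words q n) = q ^ n"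
proof (induction n)
  case (Suc n)
  have "inj_on (\<lambda>(s,u). s # u) ({..<q} \<times> words q n)" by (auto simp: inj_on_def)
  thus ?case using Suc by (simp add: words_Suc_cons card_image card_cartesian_product)
qed simp

lemma sum_words_Suc_cons:
  "(\<Sum>v\<in>words q (Suc n). g v) = (\<Sum>s<q. \<Sum>u\<in>words q n. g (s # u))"
proof -
  have "inj_on (\<lambda>(s,u). s # u) ({..<q} \<times> words q n)" by (auto simp: inj_on_def)
  hence "(\<Sum>v\<in>words q (Suc n). g v) = (\<Sum>x\<in>{..<q} \<times> words q n. g (case x of (s,u) \<Rightarrow> s # u))"
    by (simp add: words_Suc_cons sum.reindex)
  also have "\<dots> = (\<Sum>s<q. \<Sum>u\<in>words q n. g (s # u))"
    by (simp add: sum.cartesian_product split_def)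
  finally show ?thesis .
qed

lemma words_append: "words q (n + j) = (\<lambda>(w,u). w @ u) ` (words q n \<times> words q j)"
proof -
  have "v \<in> (\<lambda>(w,u). w @ u) ` (words q n \<times> words q j)" if "v \<in> words q (n + j)" for v
    using that by (auto simp: words_def intro!: image_eqI[of _ _ "(take n v, drop n v)"]
        dest: in_set_takeD in_set_dropD)
  thus ?thesis by (auto simp: words_def)
qed

lemma sum_words_append:
  "(\<Sum>v\<in>words q (n + j). g v) = (\<Sum>w\<in>words q n. \<Sum>u\<in>words q j. g (w @ u))"
proof -
  have "inj_on (\<lambda>(w,u). w @ u) (words q n \<times> words q j)" by (auto simp: inj_on_def words_def)
  hence "(\<Sum>v\<in>words q (n + j). g v) = (\<Sum>x\<in>words q n \<times> words q j. g (case x of (w,u) \<Rightarrow> w @ u))"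
    by (simp add: words_append sum.reindex)
  also have "\<dots> = (\<Sum>w\<in>words q n. \<Sum>u\<in>words q j. g (w @ u))"
    by (simp add: sum.cartesian_product split_def)
  finally show ?thesis .
qed

lemma sum_words_snoc:
  "(\<Sum>v\<in>words q (Suc n). g v) = (\<Sum>w\<in>words q n. \<Sum>s<q. g (w @ [s]))"
  using sum_words_append[where q=q and n=n and j=1 and g=g] by (simp add: sum_words_Suc_cons)

lemma words_append_mem: "w \<in> words q n \<Longrightarrow> u \<in> words q j \<Longrightarrow> w @ u \<in> words q (n + j)"
  by (auto simp: words_def)

lemma words_snoc_mem: "w \<in> words q n \<Longrightarrow> s < q \<Longrightarrow> w @ [s] \<in> words q (Suc n)"
  by (auto simp: words_def)

lemma words_length: "w \<in> words q n \<Longrightarrow> length w = n"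
  by (auto simp: words_def)

lemma cs_card: "(cmod (\<Sum>i\<in>F. x i))\<^sup>2 \<le> real (card F) * (\<Sum>i\<in>F. (cmod (x i))\<^sup>2)"
proof -
  have "cmod (\<Sum>i\<in>F. x i) \<le> (\<Sum>i\<in>F. 1 * cmod (x i))" by (simp add: norm_sum)
  hence "(cmod (\<Sum>i\<in>F. x i))\<^sup>2 \<le> (\<Sum>i\<in>F. 1 * cmod (x i))\<^sup>2"
    by (simp add: power_mono)
  also have "\<dots> \<le> (\<Sum>i\<in>F. 1\<^sup>2) * (\<Sum>i\<in>F. (cmod (x i))\<^sup>2)"
    by (rule Cauchy_Schwarz_ineq_sum)
  finally show ?thesis by simp
qed




lemma amgm_opt:
  fixes X A B :: real
  assumes A: "A \<ge> 0" and B: "B \<ge> 0" and H: "\<And>t. t > 0 \<Longrightarrow> X \<le> (t * A + B / t) / 2"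
  shows "X \<le> sqrt A * sqrt B"
proof (cases "A > 0 \<and> B > 0")
  case True
  define t where "t = sqrt B / sqrt A"
  have t: "t > 0" using True by (simp add: t_def)
  have sA: "sqrt A * sqrt A = A" and sB: "sqrt B * sqrt B = B" using A B by simp_all
  have pa: "sqrt A > 0" using True by simp
  have "t * A = sqrt A * sqrt B" unfolding t_def using pa
    by (subst sA[symmetric]) (simp add: field_simps)
  moreover have "B / t = sqrt A * sqrt B" unfolding t_def using pa True
    by (subst sB[symmetric]) (simp add: field_simps)
  ultimately show ?thesis using H[OF t] by simp
next
  case False
  show ?thesis
  proof (rule ccontr)
    assume nle: "\<not> X \<le> sqrt A * sqrt B"
    from False A B have z: "A = 0 \<or> B = 0" by auto
    hence "sqrt A * sqrt B = 0" by auto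
    with nle have X: "X > 0" by simp
    show False
    proof (cases "A = 0")
      case True
      define t where "t = B / X + 1"
      have "B / X \<ge> 0" using B X by simp
      hence t: "t > 0" by (simp add: t_def)
      have "B / t < X"
      proof -
        have "B < X * t" using X B by (simp add: t_def algebra_simps)
        thus ?thesis using t by (simp add: divide_less_eq)
      qed
      hence "(t * A + B / t) / 2 < X" using True X by simp
      with H[OF t] show False by simp
    next
      case False
      with z have B0: "B = 0" by simp
      from False A have Ap: "A > 0" by simp
      define t where "t = X / A"
      have t: "t > 0" using X Ap by (simp add: t_def)
      have "(t * A + B / t) / 2 < X" using B0 Ap X by (simp add: t_def)
      with H[OF t] show False by simp
    qed
  qed
qed

lemma cmod_mult_cnj_le:
  fixes a b :: complex and t :: real
  assumes "t > 0"
  shows "cmod (a * cnj b) \<le> (t * (cmod a)\<^sup>2 + (cmod b)\<^sup>2 / t) / 2"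
proof -
  have "0 \<le> (sqrt t * cmod a - cmod b / sqrt t)\<^sup>2" by simp
  also have "\<dots> = (sqrt t)\<^sup>2 * (cmod a)\<^sup>2 + (cmod b)\<^sup>2 / (sqrt t)\<^sup>2 - 2 * (cmod a * cmod b)"
    using assms by (simp add: power2_diff power_mult_distrib power_divide)
  also have "\<dots> = t * (cmod a)\<^sup>2 + (cmod b)\<^sup>2 / t - 2 * (cmod a * cmod b)"
    using assms by simp
  finally show ?thesis by (simp add: norm_mult)
qed

lemma cmod_add_sq: "(cmod (a + b))\<^sup>2 \<le> 2 * (cmod a)\<^sup>2 + 2 * (cmod b)\<^sup>2"
proof -
  have "cmod (a + b) \<le> cmod a + cmod b" by (rule norm_triangle_ineq)
  hence "(cmod (a + b))\<^sup>2 \<le> (cmod a + cmod b)\<^sup>2" by (simp add: power_mono)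
  also have "\<dots> \<le> 2 * (cmod a)\<^sup>2 + 2 * (cmod b)\<^sup>2"
    using sum_squares_ge_zero[of "cmod a - cmod b" 0] by (simp add: power2_eq_square algebra_simps)
  finally show ?thesis .
qed

lemma cmod_diff_sq: "(cmod (a - b))\<^sup>2 \<le> 2 * (cmod a)\<^sup>2 + 2 * (cmod b)\<^sup>2"
  using cmod_add_sq[of a "-b"] by simp

locale tree =
  fixes p e f :: nat
  assumes prime_p: "prime p" and e1: "e \<ge> 1" and f1: "f \<ge> 1"
begin

abbreviation "q \<equiv> p ^ f"
abbreviation "H \<equiv> Hspace p f"
abbreviation "L \<equiv> level_sq p f"
definition N2 :: "tvec \<Rightarrow> real" where "N2 \<phi> = (\<Sum>n. L \<phi> n)"

lemma p2: "p \<ge> 2" using prime_p by (simp add: prime_ge_2_nat)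
lemma q2: "q \<ge> 2"
proof -
  have "p ^ 1 \<le> p ^ f" using f1 p2 by (intro power_increasing) auto
  thus ?thesis using p2 by simp
qed
abbreviation "Q \<equiv> real p ^ f"
lemma qpos: "Q > 0" using p2 by simp
lemma Q2: "Q \<ge> 2" using q2 by (metis of_nat_le_iff of_nat_numeral of_nat_power)
lemma Qn_pos: "Q ^ n > 0" using qpos by simp

lemma pow_nf: "real p ^ (n * f) = Q ^ n"
  by (simp add: power_mult mult.commute)

lemma L_def': "L \<phi> n = (\<Sum>w\<in>words q n. (cmod (\<phi> n w))\<^sup>2) / Q ^ n"
  by (simp add: level_sq_def pow_nf)

lemma L_nonneg: "L \<phi> n \<ge> 0"
  by (simp add: L_def' sum_nonneg)

lemma H_iff: "\<phi> \<in> H \<longleftrightarrow> (\<forall>n w. w \<notin> words q n \<longrightarrow> \<phi> n w = 0) \<and> summable (L \<phi>)"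
  by (simp add: Hspace_def)

lemma H_vanish: "\<phi> \<in> H \<Longrightarrow> w \<notin> words q n \<Longrightarrow> \<phi> n w = 0"
  by (simp add: Hspace_def)

lemma H_summable: "\<phi> \<in> H \<Longrightarrow> summable (L \<phi>)"
  by (simp add: Hspace_def)

lemma N2_nonneg: "\<phi> \<in> H \<Longrightarrow> N2 \<phi> \<ge> 0"
  unfolding N2_def by (intro suminf_nonneg H_summable) (auto simp: L_nonneg)

lemma Hnorm_sq: "\<phi> \<in> H \<Longrightarrow> (Hnorm p f \<phi>)\<^sup>2 = N2 \<phi>"
  using N2_nonneg by (simp add: Hnorm_def N2_def[symmetric])

lemma Hnorm_N2: "Hnorm p f \<phi> = sqrt (N2 \<phi>)"
  by (simp add: Hnorm_def N2_def)

lemma L_le_N2: "\<phi> \<in> H \<Longrightarrow> L \<phi> n \<le> N2 \<phi>"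
  unfolding N2_def using H_summable
  by (intro sum_le_suminf[of _ "{n}", simplified]) (auto simp: L_nonneg)

lemma coord_le_L: "w \<in> words q n \<Longrightarrow> (cmod (\<phi> n w))\<^sup>2 \<le> Q ^ n * L \<phi> n"
proof -
  assume w: "w \<in> words q n"
  have "(cmod (\<phi> n w))\<^sup>2 \<le> (\<Sum>v\<in>words q n. (cmod (\<phi> n v))\<^sup>2)"
    using w by (intro member_le_sum) auto
  thus ?thesis using Qn_pos[of n] p2 by (simp add: L_def')
qed

lemma coord_bound: "\<phi> \<in> H \<Longrightarrow> (cmod (\<phi> n w))\<^sup>2 \<le> Q ^ n * N2 \<phi>"
proof (cases "w \<in> words q n")
  case True
  assume "\<phi> \<in> H"
  hence "Q ^ n * L \<phi> n \<le> Q ^ n * N2 \<phi>" by (intro mult_left_mono L_le_N2) auto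
  thus ?thesis using coord_le_L[OF True, of \<phi>] by linarith
next
  case False
  assume a: "\<phi> \<in> H"
  thus ?thesis using False N2_nonneg[OF a] by (simp add: H_vanish)
qed

lemma L_add_le: "L (\<lambda>n w. \<phi> n w + \<psi> n w) n \<le> 2 * L \<phi> n + 2 * L \<psi> n"
proof -
  have "(\<Sum>w\<in>words q n. (cmod (\<phi> n w + \<psi> n w))\<^sup>2) \<le>
      (\<Sum>w\<in>words q n. 2 * (cmod (\<phi> n w))\<^sup>2 + 2 * (cmod (\<psi> n w))\<^sup>2)"
    by (intro sum_mono cmod_add_sq)
  also have "\<dots> = 2 * (\<Sum>w\<in>words q n. (cmod (\<phi> n w))\<^sup>2) + 2 * (\<Sum>w\<in>words q n. (cmod (\<psi> n w))\<^sup>2)"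
    by (simp add: sum.distrib sum_distrib_left)
  finally have "(\<Sum>w\<in>words q n. (cmod (\<phi> n w + \<psi> n w))\<^sup>2) / Q ^ n \<le> (2 * (\<Sum>w\<in>words q n. (cmod (\<phi> n w))\<^sup>2) + 2 * (\<Sum>w\<in>words q n. (cmod (\<psi> n w))\<^sup>2)) / Q ^ n"
    by (rule divide_right_mono) (simp add: Qn_pos less_imp_le)
  thus ?thesis by (simp add: L_def' add_divide_distrib)
qed

lemma L_scale: "L (\<lambda>n w. c * \<phi> n w) n = (cmod c)\<^sup>2 * L \<phi> n"
  by (simp add: L_def' norm_mult power_mult_distrib sum_distrib_left)

lemma H_add: "\<phi> \<in> H \<Longrightarrow> \<psi> \<in> H \<Longrightarrow> (\<lambda>n w. \<phi> n w + \<psi> n w) \<in> H"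
proof -
  assume a: "\<phi> \<in> H" "\<psi> \<in> H"
  have s: "summable (\<lambda>n. 2 * L \<phi> n + 2 * L \<psi> n)"
    using a by (intro summable_add summable_mult H_summable)
  have "summable (L (\<lambda>n w. \<phi> n w + \<psi> n w))"
    by (rule summable_comparison_test[OF _ s]) (simp add: L_nonneg L_add_le)
  thus ?thesis using a unfolding H_iff by simp
qed

lemma H_scale: "\<phi> \<in> H \<Longrightarrow> (\<lambda>n w. c * \<phi> n w) \<in> H"
proof -
  assume a: "\<phi> \<in> H"
  have "summable (\<lambda>n. (cmod c)\<^sup>2 * L \<phi> n)" by (intro summable_mult H_summable a)
  moreover have "L (\<lambda>n w. c * \<phi> n w) = (\<lambda>n. (cmod c)\<^sup>2 * L \<phi> n)"
    by (rule ext) (rule L_scale)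
  ultimately have "summable (L (\<lambda>n w. c * \<phi> n w))" by simp
  thus ?thesis using a unfolding H_iff by simp
qed

lemma L_zero[simp]: "L (\<lambda>n w. 0) = (\<lambda>n. 0)"
  by (simp add: level_sq_def fun_eq_iff)

lemma H_zero: "(\<lambda>n w. 0) \<in> H"
  by (simp add: H_iff)

lemma H_diff: "\<phi> \<in> H \<Longrightarrow> \<psi> \<in> H \<Longrightarrow> \<phi> - \<psi> \<in> H"
proof -
  assume a: "\<phi> \<in> H" "\<psi> \<in> H"
  have "(\<lambda>n w. \<phi> n w + (-1) * \<psi> n w) \<in> H" by (intro H_add H_scale a)
  moreover have "(\<lambda>n w. \<phi> n w + (-1) * \<psi> n w) = \<phi> - \<psi>" by (auto simp: fun_eq_iff)
  ultimately show ?thesis by simp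
qed

lemma H_sum: "finite F \<Longrightarrow> (\<And>b. b \<in> F \<Longrightarrow> b \<in> H) \<Longrightarrow> (\<lambda>n w. \<Sum>b\<in>F. c b * b n w) \<in> H"
proof (induction F rule: finite_induct)
  case empty thus ?case using H_zero by simp
next
  case (insert x F)
  have "(\<lambda>n w. c x * x n w + (\<Sum>b\<in>F. c b * b n w)) \<in> H"
    using insert by (intro H_add H_scale) auto
  thus ?case using insert by simp
qed

end



context tree begin

definition It :: "tvec \<Rightarrow> tvec \<Rightarrow> nat \<Rightarrow> complex" where
  "It \<phi> \<psi> n = (\<Sum>w\<in>words q n. \<phi> n w * cnj (\<psi> n w)) / of_real (Q ^ n)"

lemma Hinner_It: "Hinner p f \<phi> \<psi> = (\<Sum>n. It \<phi> \<psi> n)"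
proof -
  have "of_nat (p ^ (n * f)) = (of_real (Q ^ n) :: complex)" for n
    by (metis of_real_of_nat_eq of_nat_power pow_nf)
  thus ?thesis by (simp add: Hinner_def It_def)
qed

lemma It_bound:
  assumes t: "t > 0"
  shows "cmod (It \<phi> \<psi> n) \<le> (t * L \<phi> n + L \<psi> n / t) / 2"
proof -
  have "cmod (\<Sum>w\<in>words q n. \<phi> n w * cnj (\<psi> n w)) \<le> (\<Sum>w\<in>words q n. cmod (\<phi> n w * cnj (\<psi> n w)))"
    by (rule norm_sum)
  also have "\<dots> \<le> (\<Sum>w\<in>words q n. (t * (cmod (\<phi> n w))\<^sup>2 + (cmod (\<psi> n w))\<^sup>2 / t) / 2)"
    by (intro sum_mono cmod_mult_cnj_le t)
  also have "\<dots> = (t * (\<Sum>w\<in>words q n. (cmod (\<phi> n w))\<^sup>2) + (\<Sum>w\<in>words q n. (cmod (\<psi> n w))\<^sup>2) / t) / 2"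
    by (simp add: sum_divide_distrib[symmetric] sum.distrib sum_distrib_left add_divide_distrib)
  finally have *: "cmod (\<Sum>w\<in>words q n. \<phi> n w * cnj (\<psi> n w)) \<le>
      (t * (\<Sum>w\<in>words q n. (cmod (\<phi> n w))\<^sup>2) + (\<Sum>w\<in>words q n. (cmod (\<psi> n w))\<^sup>2) / t) / 2" .
  have "cmod (It \<phi> \<psi> n) = cmod (\<Sum>w\<in>words q n. \<phi> n w * cnj (\<psi> n w)) / Q ^ n"
    by (simp only: It_def norm_divide norm_of_real abs_of_pos[OF Qn_pos])
  also have "\<dots> \<le> ((t * (\<Sum>w\<in>words q n. (cmod (\<phi> n w))\<^sup>2) + (\<Sum>w\<in>words q n. (cmod (\<psi> n w))\<^sup>2) / t) / 2) / Q ^ n"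
    using Qn_pos[of n] * by (intro divide_right_mono) auto
  also have "\<dots> = (t * L \<phi> n + L \<psi> n / t) / 2"
  proof -
    define A where "A = (\<Sum>w\<in>words q n. (cmod (\<phi> n w))\<^sup>2)"
    define B where "B = (\<Sum>w\<in>words q n. (cmod (\<psi> n w))\<^sup>2)"
    define Z where "Z = Q ^ n"
    have Z: "Z > 0" using Qn_pos[of n] by (simp add: Z_def)
    have "((t * A + B / t) / 2) / Z = (t * (A / Z) + (B / Z) / t) / 2"
      using t Z by (simp add: field_simps)
    thus ?thesis by (simp add: L_def' A_def B_def Z_def)
  qed
  finally show ?thesis .
qed

lemma It_summable_norm:
  assumes "\<phi> \<in> H" "\<psi> \<in> H"
  shows "summable (\<lambda>n. cmod (It \<phi> \<psi> n))"
proof (rule summable_comparison_test[OF _ summable_add[OF H_summable[OF assms(1)] H_summable[OF assms(2)]]])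
  show "\<exists>N. \<forall>n\<ge>N. norm (cmod (It \<phi> \<psi> n)) \<le> L \<phi> n + L \<psi> n"
  proof (intro exI[of _ 0] allI impI)
    fix n
    show "norm (cmod (It \<phi> \<psi> n)) \<le> L \<phi> n + L \<psi> n"
      using It_bound[of 1 \<phi> \<psi> n] L_nonneg[of \<psi> n] L_nonneg[of \<phi> n] by simp
  qed
qed

lemma It_summable: "\<phi> \<in> H \<Longrightarrow> \<psi> \<in> H \<Longrightarrow> summable (It \<phi> \<psi>)"
  using It_summable_norm summable_norm_cancel by blast

lemma Hinner_bound_t:
  assumes "\<phi> \<in> H" "\<psi> \<in> H" "t > 0"
  shows "cmod (Hinner p f \<phi> \<psi>) \<le> (t * N2 \<phi> + N2 \<psi> / t) / 2"
proof -
  have s: "summable (\<lambda>n. (t * L \<phi> n + L \<psi> n / t) / 2)"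
    using assms by (intro summable_divide summable_add summable_mult H_summable summable_divide)
  have "cmod (Hinner p f \<phi> \<psi>) \<le> (\<Sum>n. cmod (It \<phi> \<psi> n))"
    unfolding Hinner_It by (rule summable_norm[OF It_summable_norm[OF assms(1,2)]])
  also have "\<dots> \<le> (\<Sum>n. (t * L \<phi> n + L \<psi> n / t) / 2)"
    by (intro suminf_le It_bound assms It_summable_norm s)
  also have "\<dots> = (t * N2 \<phi> + N2 \<psi> / t) / 2"
  proof -
    have "(\<lambda>n. (t * L \<phi> n + L \<psi> n / t) / 2) sums ((t * N2 \<phi> + N2 \<psi> / t) / 2)"
      unfolding N2_def using assms
      by (intro sums_divide sums_add sums_mult summable_sums H_summable)
    thus ?thesis by (rule sums_unique[symmetric])
  qed
  finally show ?thesis .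
qed

lemma Hinner_bound:
  assumes "\<phi> \<in> H" "\<psi> \<in> H"
  shows "cmod (Hinner p f \<phi> \<psi>) \<le> Hnorm p f \<phi> * Hnorm p f \<psi>"
  unfolding Hnorm_N2
  by (rule amgm_opt[OF N2_nonneg[OF assms(1)] N2_nonneg[OF assms(2)]])
     (rule Hinner_bound_t[OF assms])

lemma Hinner_add_left:
  assumes "\<phi> \<in> H" "\<eta> \<in> H" "\<psi> \<in> H"
  shows "Hinner p f (\<lambda>n w. \<phi> n w + \<eta> n w) \<psi> = Hinner p f \<phi> \<psi> + Hinner p f \<eta> \<psi>"
proof -
  have "It (\<lambda>n w. \<phi> n w + \<eta> n w) \<psi> = (\<lambda>n. It \<phi> \<psi> n + It \<eta> \<psi> n)"
    by (simp add: fun_eq_iff It_def distrib_right sum.distrib add_divide_distrib)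
  thus ?thesis unfolding Hinner_It
    using suminf_add[OF It_summable[OF assms(1,3)] It_summable[OF assms(2,3)]] by simp
qed

lemma Hinner_scale_left:
  assumes "\<phi> \<in> H" "\<psi> \<in> H"
  shows "Hinner p f (\<lambda>n w. c * \<phi> n w) \<psi> = c * Hinner p f \<phi> \<psi>"
proof -
  have "It (\<lambda>n w. c * \<phi> n w) \<psi> = (\<lambda>n. c * It \<phi> \<psi> n)"
    by (simp add: fun_eq_iff It_def sum_distrib_left mult.assoc)
  thus ?thesis unfolding Hinner_It
    using suminf_mult[OF It_summable[OF assms], of c] by simp
qed

lemma Hinner_cnj:
  assumes "\<phi> \<in> H" "\<psi> \<in> H"
  shows "Hinner p f \<psi> \<phi> = cnj (Hinner p f \<phi> \<psi>)"
proof -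
  have "It \<psi> \<phi> n = cnj (It \<phi> \<psi> n)" for n
    by (simp add: It_def mult.commute)
  hence "Hinner p f \<psi> \<phi> = (\<Sum>n. cnj (It \<phi> \<psi> n))" by (simp add: Hinner_It)
  also have "\<dots> = cnj (Hinner p f \<phi> \<psi>)"
  proof -
    have "(\<lambda>n. cnj (It \<phi> \<psi> n)) sums cnj (suminf (It \<phi> \<psi>))"
      using It_summable[OF assms] by (simp add: sums_cnj summable_sums)
    thus ?thesis by (simp add: sums_unique[symmetric] Hinner_It)
  qed
  finally show ?thesis .
qed

lemma Hinner_self:
  assumes "\<phi> \<in> H"
  shows "Hinner p f \<phi> \<phi> = of_real (N2 \<phi>)"
proof -
  have "It \<phi> \<phi> n = of_real (L \<phi> n)" for n
  proof -
    have "\<phi> n w * cnj (\<phi> n w) = of_real ((cmod (\<phi> n w))\<^sup>2)" for w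
      by (rule complex_norm_square[symmetric])
    thus ?thesis by (simp add: It_def L_def')
  qed
  moreover have "(\<lambda>n. of_real (L \<phi> n) :: complex) sums of_real (N2 \<phi>)"
    unfolding sums_of_real_iff N2_def using H_summable[OF assms] by (simp add: summable_sums)
  ultimately show ?thesis by (simp add: Hinner_It sums_unique[symmetric])
qed

lemma Hinner_sum_left:
  assumes "finite F" "F \<subseteq> H" "\<psi> \<in> H"
  shows "Hinner p f (\<lambda>n w. \<Sum>b\<in>F. c b * b n w) \<psi> = (\<Sum>b\<in>F. c b * Hinner p f b \<psi>)"
  using assms
proof (induction F rule: finite_induct)
  case empty
  have "It (\<lambda>n w. 0) \<psi> = (\<lambda>n. 0)" by (simp add: It_def fun_eq_iff)
  thus ?case by (simp add: Hinner_It)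
next
  case (insert x F)
  have "Hinner p f (\<lambda>n w. \<Sum>b\<in>insert x F. c b * b n w) \<psi> =
        Hinner p f (\<lambda>n w. (\<lambda>n w. c x * x n w) n w + (\<lambda>n w. \<Sum>b\<in>F. c b * b n w) n w) \<psi>"
    using insert by simp
  also have "\<dots> = Hinner p f (\<lambda>n w. c x * x n w) \<psi> + Hinner p f (\<lambda>n w. \<Sum>b\<in>F. c b * b n w) \<psi>"
    using insert by (intro Hinner_add_left H_scale H_sum) auto
  also have "\<dots> = c x * Hinner p f x \<psi> + (\<Sum>b\<in>F. c b * Hinner p f b \<psi>)"
    using insert by (simp add: Hinner_scale_left)
  finally show ?case using insert by simp
qed

lemma Hinner_diff_left:
  assumes "\<phi> \<in> H" "\<eta> \<in> H" "\<psi> \<in> H"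
  shows "Hinner p f (\<phi> - \<eta>) \<psi> = Hinner p f \<phi> \<psi> - Hinner p f \<eta> \<psi>"
proof -
  have "\<phi> - \<eta> = (\<lambda>n w. \<phi> n w + (\<lambda>n w. (-1) * \<eta> n w) n w)" by (auto simp: fun_eq_iff)
  hence "Hinner p f (\<phi> - \<eta>) \<psi> = Hinner p f \<phi> \<psi> + Hinner p f (\<lambda>n w. (-1) * \<eta> n w) \<psi>"
    using assms by (simp only: Hinner_add_left H_scale)
  also have "\<dots> = Hinner p f \<phi> \<psi> - Hinner p f \<eta> \<psi>"
    using assms by (simp only: Hinner_scale_left) simp
  finally show ?thesis .
qed

definition orthon :: "tvec set \<Rightarrow> bool" where
  "orthon B \<longleftrightarrow> B \<subseteq> H \<and> (\<forall>b\<in>B. Hnorm p f b = 1) \<and>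
     (\<forall>b\<in>B. \<forall>c\<in>B. b \<noteq> c \<longrightarrow> Hinner p f b c = 0)"

lemma orthon_self: "orthon B \<Longrightarrow> b \<in> B \<Longrightarrow> Hinner p f b b = 1"
proof -
  assume a: "orthon B" "b \<in> B"
  hence bH: "b \<in> H" and "Hnorm p f b = 1" by (auto simp: orthon_def)
  hence "N2 b = 1" using Hnorm_sq[OF bH] by simp
  thus ?thesis using Hinner_self[OF bH] by simp
qed

lemma pythag:
  assumes B: "orthon B" and F: "finite F" "F \<subseteq> B"
  shows "N2 (\<lambda>n w. \<Sum>b\<in>F. c b * b n w) = (\<Sum>b\<in>F. (cmod (c b))\<^sup>2)"
proof -
  have FH: "F \<subseteq> H" using B F by (auto simp: orthon_def)
  define x where "x = (\<lambda>n w. \<Sum>b\<in>F. c b * b n w)"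
  have xH: "x \<in> H" unfolding x_def using FH F by (intro H_sum) auto
  have ib: "Hinner p f x b = c b" if b: "b \<in> F" for b
  proof -
    have "Hinner p f x b = (\<Sum>b'\<in>F. c b' * Hinner p f b' b)"
      unfolding x_def using F FH b by (intro Hinner_sum_left) auto
    also have "\<dots> = (\<Sum>b'\<in>F. if b' = b then c b else 0)"
    proof (intro sum.cong refl)
      fix b' assume b': "b' \<in> F"
      have bB: "b \<in> B" "b' \<in> B" using b b' F by auto
      show "c b' * Hinner p f b' b = (if b' = b then c b else 0)"
      proof (cases "b' = b")
        case True thus ?thesis using orthon_self[OF B bB(1)] by simp
      next
        case False thus ?thesis using B bB unfolding orthon_def by auto
      qed
    qed
    also have "\<dots> = c b" using b F by simp
    finally show ?thesis .
  qed
  have "of_real (N2 x) = Hinner p f x x" using Hinner_self[OF xH] by simp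
  also have "\<dots> = cnj (Hinner p f x x)" by (simp add: Hinner_self[OF xH])
  also have "Hinner p f x x = (\<Sum>b\<in>F. c b * Hinner p f b x)"
    by (subst (1) x_def) (intro Hinner_sum_left F FH xH)
  also have "\<dots> = (\<Sum>b\<in>F. c b * cnj (c b))"
    using FH F xH by (intro sum.cong refl) (auto simp: Hinner_cnj[of x] ib)
  finally have "of_real (N2 x) = (\<Sum>b\<in>F. c b * cnj (c b))"
    by (simp add: mult.commute[of "cnj _"])
  also have "\<dots> = of_real (\<Sum>b\<in>F. (cmod (c b))\<^sup>2)"
    by (simp only: of_real_sum complex_norm_square)
  finally show ?thesis unfolding x_def of_real_eq_iff .
qed

end



context tree begin

lemma tends_L:
  assumes "\<And>w. (\<lambda>k. y k n w) \<longlonglongrightarrow> z n w"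
  shows "(\<lambda>k. L (y k) n) \<longlonglongrightarrow> L z n"
  unfolding L_def' using p2 by (intro tendsto_divide tendsto_sum tendsto_power tendsto_norm assms tendsto_const) auto

lemma N2_zero[simp]: "N2 (\<lambda>n w. 0) = 0"
  by (simp add: N2_def)

lemma L_swap: "L (x - y) n = L (y - x) n"
  by (simp add: L_def' norm_minus_commute)

lemma N2_swap: "N2 (x - y) = N2 (y - x)"
  by (simp add: N2_def L_swap)

lemma partial_le_N2: "\<phi> \<in> H \<Longrightarrow> (\<Sum>n<N. L \<phi> n) \<le> N2 \<phi>"
  unfolding N2_def by (intro sum_le_suminf H_summable) (auto simp: L_nonneg)

lemma N2_le_from_partial:
  assumes "\<And>N. (\<Sum>n<N. L \<phi> n) \<le> C"
  shows "summable (L \<phi>)" "N2 \<phi> \<le> C"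
proof -
  show s: "summable (L \<phi>)" by (rule summableI_nonneg_bounded[OF L_nonneg assms])
  show "N2 \<phi> \<le> C" unfolding N2_def by (rule suminf_le_const[OF s assms])
qed

lemma H_complete:
  assumes xH: "\<And>k. x k \<in> H"
    and C: "\<And>\<epsilon>. \<epsilon> > 0 \<Longrightarrow> \<exists>K. \<forall>k\<ge>K. \<forall>m\<ge>K. N2 (x k - x m) \<le> \<epsilon>"
  shows "\<exists>g\<in>H. (\<forall>n w. (\<lambda>k. x k n w) \<longlonglongrightarrow> g n w) \<and> (\<lambda>k. N2 (x k - g)) \<longlonglongrightarrow> 0"
proof -
  have dH: "x k - x m \<in> H" for k m by (intro H_diff xH)
  have cauchy: "Cauchy (\<lambda>k. x k n w)" for n w
  proof (rule metric_CauchyI)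
    fix \<epsilon> :: real assume e: "\<epsilon> > 0"
    define \<delta> where "\<delta> = \<epsilon>\<^sup>2 / (2 * Q ^ n)"
    have d: "\<delta> > 0" using e Qn_pos[of n] by (simp add: \<delta>_def)
    obtain K where K: "\<And>k m. k \<ge> K \<Longrightarrow> m \<ge> K \<Longrightarrow> N2 (x k - x m) \<le> \<delta>" using C[OF d] by blast
    show "\<exists>M. \<forall>m\<ge>M. \<forall>n'\<ge>M. dist (x m n w) (x n' n w) < \<epsilon>"
    proof (intro exI[of _ K] allI impI)
      fix k m assume km: "k \<ge> K" "m \<ge> K"
      have "(cmod (x k n w - x m n w))\<^sup>2 \<le> Q ^ n * N2 (x k - x m)"
        using coord_bound[OF dH, of k m n w] by simp
      also have "\<dots> \<le> Q ^ n * \<delta>" using K[OF km] Qn_pos[of n] by (intro mult_left_mono) auto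
      also have "\<dots> < \<epsilon>\<^sup>2" using e Qn_pos[of n] by (simp add: \<delta>_def)
      finally have "(cmod (x k n w - x m n w))\<^sup>2 < \<epsilon>\<^sup>2" .
      hence "cmod (x k n w - x m n w) < \<epsilon>" using e by (simp add: power_less_imp_less_base)
      thus "dist (x k n w) (x m n w) < \<epsilon>" by (simp add: dist_norm)
    qed
  qed
  define g where "g = (\<lambda>n w. lim (\<lambda>k. x k n w))"
  have conv: "(\<lambda>k. x k n w) \<longlonglongrightarrow> g n w" for n w
    using cauchy[of n w] unfolding g_def Cauchy_convergent_iff convergent_LIMSEQ_iff .
  have gvan: "g n w = 0" if "w \<notin> words q n" for n w
  proof -
    have "(\<lambda>k. x k n w) = (\<lambda>k. 0)" using H_vanish[OF xH that] by simp
    hence "(\<lambda>k. 0::complex) \<longlonglongrightarrow> g n w" using conv[of n w] by simp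
    thus ?thesis by (simp add: LIMSEQ_const_iff)
  qed
  have main: "x k - g \<in> H \<and> N2 (x k - g) \<le> \<epsilon>" if e: "\<epsilon> > 0" and K: "\<forall>k\<ge>K. \<forall>m\<ge>K. N2 (x k - x m) \<le> \<epsilon>"
    and k: "k \<ge> K" for k K \<epsilon>
  proof -
    have part: "(\<Sum>n<N. L (x k - g) n) \<le> \<epsilon>" for N
    proof (rule LIMSEQ_le_const2)
      show "(\<lambda>m. \<Sum>n<N. L (x k - x m) n) \<longlonglongrightarrow> (\<Sum>n<N. L (x k - g) n)"
        by (intro tendsto_sum tends_L) (simp add: tendsto_diff conv)
      show "\<exists>M. \<forall>m\<ge>M. (\<Sum>n<N. L (x k - x m) n) \<le> \<epsilon>"
        using K k partial_le_N2[OF dH] by (intro exI[of _ K]) (blast intro: order_trans)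
    qed
    have "summable (L (x k - g))" "N2 (x k - g) \<le> \<epsilon>" using N2_le_from_partial[OF part] by auto
    moreover have "\<forall>n w. w \<notin> words q n \<longrightarrow> (x k - g) n w = 0"
      using H_vanish[OF xH] gvan by simp
    ultimately show ?thesis by (simp add: H_iff)
  qed
  obtain K1 where K1: "\<forall>k\<ge>K1. \<forall>m\<ge>K1. N2 (x k - x m) \<le> 1" using C[of 1] by auto
  have "x K1 - g \<in> H" using main[OF _ K1] by simp
  hence gH: "g \<in> H"
  proof -
    assume a: "x K1 - g \<in> H"
    have "x K1 - (x K1 - g) \<in> H" by (intro H_diff xH a)
    moreover have "x K1 - (x K1 - g) = g" by (simp add: fun_eq_iff)
    ultimately show ?thesis by simp
  qed
  have "(\<lambda>k. N2 (x k - g)) \<longlonglongrightarrow> 0"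
  proof (rule LIMSEQ_I)
    fix r :: real assume r: "r > 0"
    obtain K where K: "\<forall>k\<ge>K. \<forall>m\<ge>K. N2 (x k - x m) \<le> r / 2" using C[of "r/2"] r by auto
    show "\<exists>no. \<forall>k\<ge>no. norm (N2 (x k - g) - 0) < r"
    proof (intro exI[of _ K] allI impI)
      fix k assume k: "k \<ge> K"
      from main[OF _ K k] r have "x k - g \<in> H" "N2 (x k - g) \<le> r / 2" by auto
      thus "norm (N2 (x k - g) - 0) < r" using N2_nonneg[of "x k - g"] r by simp
    qed
  qed
  thus ?thesis using gH conv by blast
qed

lemma H_zero_iff: "\<phi> \<in> H \<Longrightarrow> N2 \<phi> = 0 \<Longrightarrow> \<phi> = (\<lambda>n w. 0)"
proof -
  assume a: "\<phi> \<in> H" "N2 \<phi> = 0"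
  have "\<phi> n w = 0" for n w
    using coord_bound[OF a(1), of n w] a(2) by simp
  thus ?thesis by (simp add: fun_eq_iff)
qed

lemma parseval_ge:
  assumes B: "orthonormal_basis p f B" and hH: "h \<in> H"
    and sm: "(\<lambda>b. (cmod (Hinner p f h b))\<^sup>2) summable_on B"
  shows "N2 h \<le> infsum (\<lambda>b. (cmod (Hinner p f h b))\<^sup>2) B"
proof -
  define c where "c b = Hinner p f h b" for b
  define I where "I = infsum (\<lambda>b. (cmod (c b))\<^sup>2) B"
  have sm': "(\<lambda>b. (cmod (c b))\<^sup>2) summable_on B" using sm by (simp add: c_def)
  have BH: "B \<subseteq> H" using B by (simp add: orthonormal_basis_def)
  have Bo: "orthon B" using B by (simp add: orthonormal_basis_def orthon_def)
  have Bc: "\<And>\<phi>. \<phi> \<in> H \<Longrightarrow> (\<forall>b\<in>B. Hinner p f \<phi> b = 0) \<Longrightarrow> \<phi> = (\<lambda>n w. 0)"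
    using B by (simp add: orthonormal_basis_def)
  have I0: "I \<ge> 0" unfolding I_def by (intro infsum_nonneg) auto
  define S where "S = {b\<in>B. c b \<noteq> 0}"
  have "countable {b\<in>B. (cmod (c b))\<^sup>2 \<noteq> 0}" by (rule summable_countable_real[OF sm'])
  hence Sc: "countable S" by (simp add: S_def)
  show ?thesis
  proof (cases "S = {}")
    case True
    hence "\<forall>b\<in>B. Hinner p f h b = 0" by (auto simp: S_def c_def)
    hence "h = (\<lambda>n w. 0)" by (rule Bc[OF hH])
    thus ?thesis using I0 by (simp add: I_def c_def)
  next
    case False
    define F where "F N = from_nat_into S ` {..<N}" for N
    have FS: "F N \<subseteq> S" for N using from_nat_into[OF False] by (auto simp: F_def)
    have SB: "S \<subseteq> B" by (auto simp: S_def)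
    have FB: "F N \<subseteq> B" for N using FS SB by blast
    have Ffin: "finite (F N)" for N by (simp add: F_def)
    have Fmono: "N \<le> M \<Longrightarrow> F N \<subseteq> F M" for N M by (auto simp: F_def)
    have Fev: "\<exists>K. \<forall>N\<ge>K. b \<in> F N" if bS: "b \<in> S" for b
    proof -
      obtain k where "from_nat_into S k = b" using from_nat_into_surj[OF Sc bS] by blast
      thus ?thesis by (intro exI[of _ "Suc k"]) (auto simp: F_def)
    qed
    define g where "g N = (\<lambda>n w. \<Sum>b\<in>F N. c b * b n w)" for N
    have gH: "g N \<in> H" for N unfolding g_def using Ffin FB BH by (intro H_sum) auto
    define s where "s N = (\<Sum>b\<in>F N. (cmod (c b))\<^sup>2)" for N
    have sI: "s N \<le> I" for N unfolding s_def I_def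
      by (intro finite_sum_le_infsum sm' Ffin FB) auto
    have sinc: "incseq s" unfolding incseq_def s_def
      by (auto intro!: sum_mono2 Ffin Fmono)
    have "s \<longlonglongrightarrow> (SUP i. s i)" using sI sinc by (intro LIMSEQ_incseq_SUP) (auto intro!: bdd_aboveI[of _ I])
    hence sC: "Cauchy s" by (rule LIMSEQ_imp_Cauchy)
    have gdiff: "N2 (g M - g N) = s M - s N" if "N \<le> M" for N M
    proof -
      have "g M - g N = (\<lambda>n w. \<Sum>b\<in>F M - F N. c b * b n w)"
        unfolding g_def using Fmono[OF that] Ffin by (auto simp: fun_eq_iff sum_diff)
      hence "N2 (g M - g N) = (\<Sum>b\<in>F M - F N. (cmod (c b))\<^sup>2)"
        using pythag[OF Bo, of "F M - F N" c] Ffin FB by auto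
      also have "\<dots> = s M - s N" unfolding s_def using Fmono[OF that] Ffin by (simp add: sum_diff)
      finally show ?thesis .
    qed
    have gC: "\<exists>K. \<forall>k\<ge>K. \<forall>m\<ge>K. N2 (g k - g m) \<le> \<epsilon>" if e: "\<epsilon> > 0" for \<epsilon>
    proof -
      obtain K where K: "\<forall>m\<ge>K. \<forall>n\<ge>K. norm (s m - s n) < \<epsilon>" using CauchyD[OF sC e] by blast
      show ?thesis
      proof (intro exI[of _ K] allI impI)
        fix k m assume km: "k \<ge> K" "m \<ge> K"
        show "N2 (g k - g m) \<le> \<epsilon>"
        proof (cases "m \<le> k")
          case True thus ?thesis using gdiff[OF True] K km by fastforce
        next
          case False
          hence "N2 (g k - g m) = s m - s k" using gdiff[of k m] N2_swap by simp
          thus ?thesis using K km by fastforce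
        qed
      qed
    qed
    obtain G where GH: "G \<in> H" and Gpt: "\<forall>n w. (\<lambda>k. g k n w) \<longlonglongrightarrow> G n w"
      and Gn: "(\<lambda>k. N2 (g k - G)) \<longlonglongrightarrow> 0"
      using H_complete[OF gH gC] by blast
    have inner_G: "Hinner p f G b = c b" if bB: "b \<in> B" for b
    proof -
      have bH: "b \<in> H" using bB BH by auto
      have nb: "Hnorm p f b = 1" using B bB by (simp add: orthonormal_basis_def)
      have gb: "Hinner p f (g N) b = (if b \<in> F N then c b else 0)" for N
      proof -
        have "Hinner p f (g N) b = (\<Sum>b'\<in>F N. c b' * Hinner p f b' b)"
          unfolding g_def using Ffin FB BH bH by (intro Hinner_sum_left) auto
        also have "\<dots> = (\<Sum>b'\<in>F N. if b' = b then c b else 0)"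
        proof (intro sum.cong refl)
          fix b' assume b': "b' \<in> F N"
          have b'B: "b' \<in> B" using b' FB by auto
          show "c b' * Hinner p f b' b = (if b' = b then c b else 0)"
          proof (cases "b' = b")
            case True thus ?thesis using orthon_self[OF Bo bB] by simp
          next
            case False thus ?thesis using B bB b'B unfolding orthonormal_basis_def by auto
          qed
        qed
        also have "\<dots> = (if b \<in> F N then c b else 0)" using Ffin by simp
        finally show ?thesis .
      qed
      have ev: "\<exists>K. \<forall>N\<ge>K. Hinner p f (g N) b = c b"
      proof (cases "b \<in> S")
        case True
        then obtain K where "\<forall>N\<ge>K. b \<in> F N" using Fev by blast
        thus ?thesis using gb by auto
      next
        case False
        hence "c b = 0" using bB by (simp add: S_def)
        thus ?thesis using gb by auto
      qed
      have t1: "(\<lambda>N. Hinner p f (g N) b) \<longlonglongrightarrow> c b"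
      proof (rule tendsto_eventually)
        show "\<forall>\<^sub>F N in sequentially. Hinner p f (g N) b = c b"
          using ev unfolding eventually_sequentially by blast
      qed
      have "(\<lambda>N. Hinner p f (g N - G) b) \<longlonglongrightarrow> 0"
      proof (rule Lim_null_comparison)
        show "\<forall>\<^sub>F N in sequentially. norm (Hinner p f (g N - G) b) \<le> sqrt (N2 (g N - G))"
          using Hinner_bound[OF H_diff[OF gH GH] bH] nb by (simp add: Hnorm_N2)
        show "(\<lambda>N. sqrt (N2 (g N - G))) \<longlonglongrightarrow> 0" using tendsto_real_sqrt[OF Gn] by simp
      qed
      hence "(\<lambda>N. Hinner p f (g N) b - Hinner p f G b) \<longlonglongrightarrow> 0"
        by (simp add: Hinner_diff_left[OF gH GH bH])
      hence "(\<lambda>N. Hinner p f (g N) b) \<longlonglongrightarrow> Hinner p f G b"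
        by (rule LIM_zero_cancel)
      thus ?thesis using t1 LIMSEQ_unique by blast
    qed
    have "h - G = (\<lambda>n w. 0)"
    proof (rule Bc)
      show "h - G \<in> H" by (intro H_diff hH GH)
      show "\<forall>b\<in>B. Hinner p f (h - G) b = 0"
        using inner_G BH by (simp add: Hinner_diff_left[OF hH GH] c_def subset_iff)
    qed
    hence hG: "h = G" by (simp add: fun_eq_iff)
    have "N2 G \<le> I"
    proof (rule N2_le_from_partial(2))
      fix N'
      show "(\<Sum>n<N'. L G n) \<le> I"
      proof (rule LIMSEQ_le_const2)
        show "(\<lambda>N. \<Sum>n<N'. L (g N) n) \<longlonglongrightarrow> (\<Sum>n<N'. L G n)"
          using Gpt by (intro tendsto_sum tends_L) auto
        show "\<exists>M. \<forall>N\<ge>M. (\<Sum>n<N'. L (g N) n) \<le> I"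
        proof (intro exI[of _ 0] allI impI)
          fix N
          have "(\<Sum>n<N'. L (g N) n) \<le> N2 (g N)" by (rule partial_le_N2[OF gH])
          also have "\<dots> = s N" unfolding g_def s_def using pythag[OF Bo Ffin FB] .
          finally show "(\<Sum>n<N'. L (g N) n) \<le> I" using sI[of N] by simp
        qed
      qed
    qed
    thus ?thesis using hG by (simp add: I_def c_def)
  qed
qed

end



lemma wcs:
  fixes c z :: "nat \<Rightarrow> real"
  assumes c0: "\<And>j. c j \<ge> 0" and z0: "\<And>j. z j \<ge> 0"
    and sc: "summable c" and sz: "summable (\<lambda>j. c j * (z j)\<^sup>2)"
  shows "summable (\<lambda>j. c j * z j)" "(\<Sum>j. c j * z j)\<^sup>2 \<le> (\<Sum>j. c j) * (\<Sum>j. c j * (z j)\<^sup>2)"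
proof -
  have pt: "c j * z j \<le> (t * c j + c j * (z j)\<^sup>2 / t) / 2" if t: "t > 0" for t j
  proof -
    have "0 \<le> c j * (sqrt t - z j / sqrt t)\<^sup>2" using c0 by simp
    also have "\<dots> = c j * ((sqrt t)\<^sup>2 + (z j)\<^sup>2 / (sqrt t)\<^sup>2 - 2 * z j)"
      using t by (simp add: power2_diff power_divide)
    also have "\<dots> = c j * (t + (z j)\<^sup>2 / t - 2 * z j)" using t by simp
    finally show ?thesis by (simp add: field_simps)
  qed
  have s1: "summable (\<lambda>j. (1 * c j + c j * (z j)\<^sup>2 / 1) / 2)"
    by (intro summable_divide summable_add summable_mult sc sz)
  show sm: "summable (\<lambda>j. c j * z j)"
    by (rule summable_comparison_test[OF _ s1]) (use pt[of 1] c0 z0 in auto)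
  have b: "(\<Sum>j. c j * z j) \<le> ((t * (\<Sum>j. c j) + (\<Sum>j. c j * (z j)\<^sup>2) / t) / 2)" if t: "t > 0" for t
  proof -
    have st: "(\<lambda>j. (t * c j + c j * (z j)\<^sup>2 / t) / 2) sums ((t * (\<Sum>j. c j) + (\<Sum>j. c j * (z j)\<^sup>2) / t) / 2)"
      by (intro sums_divide sums_add sums_mult summable_sums sc sz)
    show ?thesis using suminf_le[OF pt[OF t] sm sums_summable[OF st]] sums_unique[OF st] by simp
  qed
  have nn: "(\<Sum>j. c j) \<ge> 0" "(\<Sum>j. c j * (z j)\<^sup>2) \<ge> 0" "(\<Sum>j. c j * z j) \<ge> 0"
    using c0 z0 by (auto intro!: suminf_nonneg sc sz sm)
  have "(\<Sum>j. c j * z j) \<le> sqrt (\<Sum>j. c j) * sqrt (\<Sum>j. c j * (z j)\<^sup>2)"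
    by (rule amgm_opt[OF nn(1,2) b])
  hence "(\<Sum>j. c j * z j)\<^sup>2 \<le> (sqrt (\<Sum>j. c j) * sqrt (\<Sum>j. c j * (z j)\<^sup>2))\<^sup>2"
    using nn(3) by (intro power_mono) auto
  thus "(\<Sum>j. c j * z j)\<^sup>2 \<le> (\<Sum>j. c j) * (\<Sum>j. c j * (z j)\<^sup>2)"
    using nn by (simp add: power_mult_distrib)
qed

context tree begin

definition a :: real where "a = real p powr (1 / real e)"
definition r :: real where "r = inverse a"
definition S :: real where "S = 1 / (1 - r)"

lemma a_gt1: "a > 1"
  unfolding a_def using p2 e1 by (intro gr_one_powr) auto

lemma r_pos: "r > 0" and r_lt1: "r < 1"
  using a_gt1 by (auto simp: r_def inverse_less_1_iff)

lemma S_pos: "S > 0" using r_lt1 by (simp add: S_def)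

lemma sum_r: "(\<lambda>j. r ^ j) sums S"
  unfolding S_def using r_pos r_lt1 by (intro geometric_sums) auto

lemma powr_n: "real p powr (real n / real e) = a ^ n"
proof -
  have "a ^ n = a powr real n" using a_gt1 by (simp add: powr_realpow)
  also have "\<dots> = real p powr (1 / real e * real n)" unfolding a_def by (simp add: powr_powr)
  finally show ?thesis by simp
qed

lemma ar: "a ^ n * r ^ n = 1"
  using a_gt1 by (simp add: r_def power_inverse[symmetric] flip: power_mult_distrib)

definition avg :: "nat \<Rightarrow> tvec \<Rightarrow> nat \<Rightarrow> nat list \<Rightarrow> complex" where
  "avg j \<psi> m w = (\<Sum>u\<in>words q j. \<psi> m (w @ u)) / of_real (Q ^ j)"

definition Top :: "tvec \<Rightarrow> tvec" where
  "Top \<psi> = (\<lambda>n w. if w \<in> words q n then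
      (\<Sum>j. of_real (r ^ (n + j)) * avg j \<psi> (n + j) w) else 0)"

lemma avg_bound:
  "(cmod (avg j \<psi> m w))\<^sup>2 \<le> (\<Sum>u\<in>words q j. (cmod (\<psi> m (w @ u)))\<^sup>2) / Q ^ j"
proof -
  have "(cmod (\<Sum>u\<in>words q j. \<psi> m (w @ u)))\<^sup>2 \<le> real (card (words q j)) * (\<Sum>u\<in>words q j. (cmod (\<psi> m (w @ u)))\<^sup>2)"
    by (rule cs_card)
  also have "real (card (words q j)) = Q ^ j" by simp
  finally have *: "(cmod (\<Sum>u\<in>words q j. \<psi> m (w @ u)))\<^sup>2 \<le> Q ^ j * (\<Sum>u\<in>words q j. (cmod (\<psi> m (w @ u)))\<^sup>2)" .
  have "(cmod (avg j \<psi> m w))\<^sup>2 = (cmod (\<Sum>u\<in>words q j. \<psi> m (w @ u)))\<^sup>2 / (Q ^ j)\<^sup>2"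
    by (simp only: avg_def norm_divide norm_of_real abs_of_pos[OF Qn_pos] power_divide)
  also have "\<dots> \<le> Q ^ j * (\<Sum>u\<in>words q j. (cmod (\<psi> m (w @ u)))\<^sup>2) / (Q ^ j)\<^sup>2"
    using * by (intro divide_right_mono) auto
  also have "\<dots> = (\<Sum>u\<in>words q j. (cmod (\<psi> m (w @ u)))\<^sup>2) / Q ^ j"
    using Qn_pos[of j] by (simp add: power2_eq_square)
  finally show ?thesis .
qed

lemma avg_level:
  "(\<Sum>w\<in>words q n. (cmod (avg j \<psi> (n + j) w))\<^sup>2) \<le> Q ^ n * L \<psi> (n + j)"
proof -
  have "(\<Sum>w\<in>words q n. (cmod (avg j \<psi> (n + j) w))\<^sup>2) \<le>
        (\<Sum>w\<in>words q n. (\<Sum>u\<in>words q j. (cmod (\<psi> (n + j) (w @ u)))\<^sup>2) / Q ^ j)"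
    by (intro sum_mono avg_bound)
  also have "\<dots> = (\<Sum>v\<in>words q (n + j). (cmod (\<psi> (n + j) v))\<^sup>2) / Q ^ j"
    by (simp add: sum_words_append sum_divide_distrib)
  also have "\<dots> = Q ^ n * L \<psi> (n + j)"
    using Qn_pos[of j] Qn_pos[of n] p2 by (simp add: L_def' power_add field_simps)
  finally show ?thesis .
qed

lemma avg_pt: "\<psi> \<in> H \<Longrightarrow> w \<in> words q n \<Longrightarrow> (cmod (avg j \<psi> (n + j) w))\<^sup>2 \<le> Q ^ n * N2 \<psi>"
proof -
  assume a: "\<psi> \<in> H" "w \<in> words q n"
  have "(cmod (avg j \<psi> (n + j) w))\<^sup>2 \<le> (\<Sum>w\<in>words q n. (cmod (avg j \<psi> (n + j) w))\<^sup>2)"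
    using a(2) by (intro member_le_sum) auto
  also have "\<dots> \<le> Q ^ n * L \<psi> (n + j)" by (rule avg_level)
  also have "\<dots> \<le> Q ^ n * N2 \<psi>" using L_le_N2[OF a(1)] Qn_pos[of n] by (intro mult_left_mono) auto
  finally show ?thesis .
qed

lemma Top_series:
  assumes "\<psi> \<in> H" "w \<in> words q n"
  shows "summable (\<lambda>j. r ^ j * cmod (avg j \<psi> (n + j) w))"
    "summable (\<lambda>j. r ^ j * (cmod (avg j \<psi> (n + j) w))\<^sup>2)"
    "summable (\<lambda>j. of_real (r ^ (n + j)) * avg j \<psi> (n + j) w)"
proof -
  define M where "M = Q ^ n * N2 \<psi>"
  have M: "M \<ge> 0" using N2_nonneg[OF assms(1)] Qn_pos[of n] by (simp add: M_def)
  have b2: "(cmod (avg j \<psi> (n + j) w))\<^sup>2 \<le> M" for j using avg_pt[OF assms] by (simp add: M_def)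
  have b1: "cmod (avg j \<psi> (n + j) w) \<le> sqrt M" for j using b2[of j] by (simp add: real_le_rsqrt)
  have g: "summable (\<lambda>j. r ^ j)" using sum_r by (rule sums_summable)
  show s1: "summable (\<lambda>j. r ^ j * cmod (avg j \<psi> (n + j) w))"
    by (rule summable_comparison_test[OF _ summable_mult2[OF g, of "sqrt M"]])
       (use b1 r_pos in \<open>auto intro!: mult_left_mono\<close>)
  show "summable (\<lambda>j. r ^ j * (cmod (avg j \<psi> (n + j) w))\<^sup>2)"
    by (rule summable_comparison_test[OF _ summable_mult2[OF g, of "M"]])
       (use b2 r_pos in \<open>auto intro!: mult_left_mono\<close>)
  have "summable (\<lambda>j. r ^ n * (r ^ j * cmod (avg j \<psi> (n + j) w)))" by (intro summable_mult s1)
  hence "summable (\<lambda>j. norm (of_real (r ^ (n + j)) * avg j \<psi> (n + j) w))"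
    using r_pos by (simp add: norm_mult norm_power power_add mult.assoc abs_of_pos)
  thus "summable (\<lambda>j. of_real (r ^ (n + j)) * avg j \<psi> (n + j) w)" by (rule summable_norm_cancel)
qed

lemma Top_pt:
  assumes "\<psi> \<in> H" "w \<in> words q n"
  shows "(cmod (Top \<psi> n w))\<^sup>2 \<le> r ^ (2 * n) * S * (\<Sum>j. r ^ j * (cmod (avg j \<psi> (n + j) w))\<^sup>2)"
proof -
  note sm = Top_series[OF assms]
  define z where "z j = cmod (avg j \<psi> (n + j) w)" for j
  define F where "F j = of_real (r ^ (n + j)) * avg j \<psi> (n + j) w" for j
  have nF: "(\<lambda>j. norm (F j)) = (\<lambda>j. r ^ n * (r ^ j * z j))"
    using r_pos by (simp add: fun_eq_iff F_def z_def norm_mult norm_power abs_of_pos power_add mult.assoc)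
  have snF: "summable (\<lambda>j. norm (F j))" unfolding nF using sm(1) by (intro summable_mult) (simp add: z_def)
  have "cmod (Top \<psi> n w) = cmod (suminf F)" using assms(2) by (simp add: Top_def F_def[abs_def])
  also have "\<dots> \<le> (\<Sum>j. norm (F j))" by (rule summable_norm[OF snF])
  also have "\<dots> = r ^ n * (\<Sum>j. r ^ j * z j)" unfolding nF
    using sm(1) by (intro suminf_mult) (simp add: z_def)
  finally have le: "cmod (Top \<psi> n w) \<le> r ^ n * (\<Sum>j. r ^ j * z j)" .
  have w: "(\<Sum>j. r ^ j * z j)\<^sup>2 \<le> (\<Sum>j. r ^ j) * (\<Sum>j. r ^ j * (z j)\<^sup>2)"
    using r_pos sm(2) by (intro wcs(2)) (use r_lt1 in \<open>auto simp: z_def\<close>)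
  have "(cmod (Top \<psi> n w))\<^sup>2 \<le> (r ^ n * (\<Sum>j. r ^ j * z j))\<^sup>2"
    using le by (intro power_mono) auto
  also have "\<dots> = r ^ (2 * n) * (\<Sum>j. r ^ j * z j)\<^sup>2"
    by (simp add: power_mult_distrib power_mult[symmetric] mult.commute)
  also have "\<dots> \<le> r ^ (2 * n) * (S * (\<Sum>j. r ^ j * (z j)\<^sup>2))"
    using w sums_unique[OF sum_r] r_pos by (intro mult_left_mono) auto
  finally show ?thesis by (simp add: z_def mult.assoc)
qed

lemma Top_level:
  assumes "\<psi> \<in> H"
  shows "L (Top \<psi>) n \<le> r ^ (2 * n) * S\<^sup>2 * N2 \<psi>"
proof -
  define y where "y j w = (cmod (avg j \<psi> (n + j) w))\<^sup>2" for j w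
  have sy: "summable (\<lambda>j. r ^ j * y j w)" if "w \<in> words q n" for w
    using Top_series(2)[OF assms that] by (simp add: y_def)
  have "(\<Sum>w\<in>words q n. (cmod (Top \<psi> n w))\<^sup>2) \<le>
        (\<Sum>w\<in>words q n. r ^ (2 * n) * S * (\<Sum>j. r ^ j * y j w))"
    using Top_pt[OF assms] by (intro sum_mono) (simp add: y_def)
  also have "\<dots> = r ^ (2 * n) * S * (\<Sum>w\<in>words q n. \<Sum>j. r ^ j * y j w)"
    by (simp add: sum_distrib_left)
  also have "\<dots> = r ^ (2 * n) * S * (\<Sum>j. \<Sum>w\<in>words q n. r ^ j * y j w)"
  proof -
    have "(\<Sum>w\<in>words q n. \<Sum>j. r ^ j * y j w) = (\<Sum>j. \<Sum>w\<in>words q n. r ^ j * y j w)"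
      using sy by (intro suminf_sum[symmetric]) auto
    thus ?thesis by simp
  qed
  also have "\<dots> \<le> r ^ (2 * n) * S * (\<Sum>j. r ^ j * (Q ^ n * N2 \<psi>))"
  proof (intro mult_left_mono suminf_le)
    fix j
    have "(\<Sum>w\<in>words q n. r ^ j * y j w) = r ^ j * (\<Sum>w\<in>words q n. y j w)"
      by (simp add: sum_distrib_left)
    also have "\<dots> \<le> r ^ j * (Q ^ n * L \<psi> (n + j))"
      using avg_level[where n=n and j=j and \<psi>=\<psi>] r_pos by (intro mult_left_mono) (auto simp: y_def)
    also have "\<dots> \<le> r ^ j * (Q ^ n * N2 \<psi>)"
      using L_le_N2[OF assms] r_pos Qn_pos[of n] by (intro mult_left_mono) auto
    finally show "(\<Sum>w\<in>words q n. r ^ j * y j w) \<le> r ^ j * (Q ^ n * N2 \<psi>)" .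
  next
    show "summable (\<lambda>j. \<Sum>w\<in>words q n. r ^ j * y j w)" using sy by (intro summable_sum) auto
    show "summable (\<lambda>j. r ^ j * (Q ^ n * N2 \<psi>))"
      using sum_r by (intro summable_mult2) (rule sums_summable)
    show "0 \<le> r ^ (2 * n) * S" using r_pos S_pos by simp
  qed
  also have "\<dots> = r ^ (2 * n) * S * (S * (Q ^ n * N2 \<psi>))"
    using sums_unique[OF sum_r] suminf_mult2[OF sums_summable[OF sum_r], of "Q ^ n * N2 \<psi>"] by simp
  finally show ?thesis using Qn_pos[of n] by (simp add: L_def' divide_le_eq power2_eq_square mult_ac)
qed

end



context tree begin

lemma r2_sums: "(\<lambda>n. r ^ (2 * n)) sums (1 / (1 - r\<^sup>2))"
proof -
  have "(\<lambda>n. (r\<^sup>2) ^ n) sums (1 / (1 - r\<^sup>2))"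
    using r_pos r_lt1 by (intro geometric_sums) (simp add: abs_square_less_1)
  thus ?thesis by (simp add: power_mult)
qed

definition CT :: real where "CT = S\<^sup>2 / (1 - r\<^sup>2)"

lemma CT_pos: "CT > 0"
  using S_pos r_pos r_lt1 by (simp add: CT_def abs_square_less_1)

lemma Top_vanish: "w \<notin> words q n \<Longrightarrow> Top \<psi> n w = 0"
  by (simp add: Top_def)

lemma Top_H: "\<psi> \<in> H \<Longrightarrow> Top \<psi> \<in> H"
proof -
  assume a: "\<psi> \<in> H"
  have "summable (\<lambda>n. r ^ (2 * n) * (S\<^sup>2 * N2 \<psi>))"
    using r2_sums by (intro summable_mult2) (rule sums_summable)
  hence "summable (L (Top \<psi>))"
    by (rule summable_comparison_test[rotated]) (use Top_level[OF a] L_nonneg in \<open>auto simp: mult.assoc\<close>)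
  thus ?thesis by (simp add: H_iff Top_vanish)
qed

lemma Top_tail:
  assumes "\<psi> \<in> H"
  shows "(\<Sum>n. L (Top \<psi>) (n + N)) \<le> r ^ (2 * N) * CT * N2 \<psi>"
proof -
  have s: "(\<lambda>n. r ^ (2 * (n + N)) * (S\<^sup>2 * N2 \<psi>)) sums (r ^ (2 * N) * (1 / (1 - r\<^sup>2)) * (S\<^sup>2 * N2 \<psi>))"
  proof -
    have "(\<lambda>n. r ^ (2 * N) * r ^ (2 * n) * (S\<^sup>2 * N2 \<psi>)) sums (r ^ (2 * N) * (1 / (1 - r\<^sup>2)) * (S\<^sup>2 * N2 \<psi>))"
      by (intro sums_mult2 sums_mult r2_sums)
    thus ?thesis by (simp add: power_add mult_ac add_mult_distrib2)
  qed
  have "(\<Sum>n. L (Top \<psi>) (n + N)) \<le> (\<Sum>n. r ^ (2 * (n + N)) * (S\<^sup>2 * N2 \<psi>))"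
  proof (rule suminf_le)
    fix n show "L (Top \<psi>) (n + N) \<le> r ^ (2 * (n + N)) * (S\<^sup>2 * N2 \<psi>)"
      using Top_level[OF assms, of "n + N"] by (simp only: mult.assoc)
    show "summable (\<lambda>n. L (Top \<psi>) (n + N))"
      using H_summable[OF Top_H[OF assms]] by (rule summable_ignore_initial_segment)
    show "summable (\<lambda>n. r ^ (2 * (n + N)) * (S\<^sup>2 * N2 \<psi>))" using sums_summable[OF s] .
  qed
  also have "\<dots> = r ^ (2 * N) * CT * N2 \<psi>" using sums_unique[OF s] by (simp add: CT_def)
  finally show ?thesis .
qed

lemma Top_N2: "\<psi> \<in> H \<Longrightarrow> N2 (Top \<psi>) \<le> CT * N2 \<psi>"
  using Top_tail[of \<psi> 0] by (simp add: N2_def)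

lemma avg_0: "avg 0 \<psi> m w = \<psi> m w"
  by (simp add: avg_def)

lemma avg_snoc: "(\<Sum>s<q. avg j \<psi> m (w @ [s])) = of_real Q * avg (Suc j) \<psi> m w"
proof -
  have "(\<Sum>s<q. avg j \<psi> m (w @ [s])) = (\<Sum>s<q. \<Sum>u\<in>words q j. \<psi> m (w @ (s # u))) / of_real (Q ^ j)"
    by (simp add: avg_def sum_divide_distrib)
  also have "(\<Sum>s<q. \<Sum>u\<in>words q j. \<psi> m (w @ (s # u))) = (\<Sum>u\<in>words q (Suc j). \<psi> m (w @ u))"
    by (simp add: sum_words_Suc_cons)
  finally show ?thesis using qpos p2 by (simp add: avg_def field_simps)
qed

lemma Dop_Top: assumes "\<psi> \<in> H" shows "Dop p e f (Top \<psi>) = \<psi>"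
proof (intro ext)
  fix n w
  show "Dop p e f (Top \<psi>) n w = \<psi> n w"
  proof (cases "w \<in> words q n")
    case False thus ?thesis by (simp add: Dop_def H_vanish[OF assms])
  next
    case True
    define F where "F j = of_real (r ^ (n + j)) * avg j \<psi> (n + j) w" for j
    have sF: "summable F" using Top_series(3)[OF assms True] by (simp add: F_def[abs_def])
    have ws: "w @ [s] \<in> words q (Suc n)" if "s < q" for s using True that by (rule words_snoc_mem)
    have T0: "Top \<psi> n w = suminf F" using True by (simp add: Top_def F_def[abs_def])
    have T1: "(\<Sum>s<q. Top \<psi> (Suc n) (w @ [s])) = of_real Q * (\<Sum>j. F (Suc j))"
    proof -
      have "(\<Sum>s<q. Top \<psi> (Suc n) (w @ [s])) =
            (\<Sum>s<q. \<Sum>j. of_real (r ^ (Suc n + j)) * avg j \<psi> (Suc n + j) (w @ [s]))"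
        using ws by (intro sum.cong refl) (simp add: Top_def)
      also have "\<dots> = (\<Sum>j. \<Sum>s<q. of_real (r ^ (Suc n + j)) * avg j \<psi> (Suc n + j) (w @ [s]))"
        using Top_series(3)[OF assms ws] by (intro suminf_sum[symmetric]) auto
      also have "\<dots> = (\<Sum>j. of_real Q * F (Suc j))"
        by (intro arg_cong[where f=suminf] ext)
           (simp add: F_def sum_distrib_left[symmetric] avg_snoc mult_ac)
      also have "\<dots> = of_real Q * (\<Sum>j. F (Suc j))"
        using sF by (intro suminf_mult) (simp add: summable_Suc_iff)
      finally show ?thesis .
    qed
    have "Top \<psi> n w - (\<Sum>s<q. Top \<psi> (Suc n) (w @ [s])) / of_nat q = F 0"
    proof -
      have "(\<Sum>s<q. Top \<psi> (Suc n) (w @ [s])) / of_nat q = (\<Sum>j. F (Suc j))"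
        using T1 qpos by (simp add: field_simps)
      thus ?thesis using T0 suminf_split_head[OF sF] by simp
    qed
    hence "Dop p e f (Top \<psi>) n w = of_real (a ^ n) * F 0"
      using True by (simp add: Dop_def powr_n)
    also have "\<dots> = of_real (a ^ n * r ^ n) * \<psi> n w" by (simp add: F_def avg_0)
    also have "\<dots> = \<psi> n w" by (simp add: ar)
    finally show ?thesis .
  qed
qed

lemma Dop_diff: "Dop p e f (\<phi> - \<psi>) = Dop p e f \<phi> - Dop p e f \<psi>"
  by (auto simp: fun_eq_iff Dop_def sum_subtractf diff_divide_distrib right_diff_distrib)

lemma Dop_kernel:
  assumes cH: "\<chi>' \<in> H" and D0: "Dop p e f \<chi>' = (\<lambda>n w. 0)"
  shows "\<chi>' = (\<lambda>n w. 0)"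
proof -
  have eq: "\<chi>' n w = (\<Sum>s<q. \<chi>' (Suc n) (w @ [s])) / of_real Q" if w: "w \<in> words q n" for n w
  proof -
    have "of_real (a ^ n) * (\<chi>' n w - (\<Sum>s<q. \<chi>' (Suc n) (w @ [s])) / of_nat q) = 0"
      using fun_cong[OF fun_cong[OF D0, of n], of w] w by (simp add: Dop_def powr_n)
    moreover have "a \<noteq> 0" using a_gt1 by simp
    ultimately show ?thesis by simp
  qed
  have mono: "L \<chi>' n \<le> L \<chi>' (Suc n)" for n
  proof -
    have pt: "(cmod (\<chi>' n w))\<^sup>2 \<le> (\<Sum>s<q. (cmod (\<chi>' (Suc n) (w @ [s])))\<^sup>2) / Q" if w: "w \<in> words q n" for w
    proof -
      have "(cmod (\<chi>' n w))\<^sup>2 = (cmod (\<Sum>s<q. \<chi>' (Suc n) (w @ [s])))\<^sup>2 / Q\<^sup>2"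
        by (simp only: eq[OF w] norm_divide norm_of_real abs_of_pos[OF qpos] power_divide)
      also have "\<dots> \<le> (Q * (\<Sum>s<q. (cmod (\<chi>' (Suc n) (w @ [s])))\<^sup>2)) / Q\<^sup>2"
        using cs_card[of "\<lambda>s. \<chi>' (Suc n) (w @ [s])" "{..<q}"] by (intro divide_right_mono) auto
      also have "\<dots> = (\<Sum>s<q. (cmod (\<chi>' (Suc n) (w @ [s])))\<^sup>2) / Q"
        using qpos by (simp add: power2_eq_square)
      finally show ?thesis .
    qed
    have "(\<Sum>w\<in>words q n. (cmod (\<chi>' n w))\<^sup>2) \<le> (\<Sum>w\<in>words q n. (\<Sum>s<q. (cmod (\<chi>' (Suc n) (w @ [s])))\<^sup>2) / Q)"
      using pt by (intro sum_mono) auto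
    also have "\<dots> = (\<Sum>v\<in>words q (Suc n). (cmod (\<chi>' (Suc n) v))\<^sup>2) / Q"
      by (simp add: sum_words_snoc sum_divide_distrib)
    finally have "(\<Sum>w\<in>words q n. (cmod (\<chi>' n w))\<^sup>2) / Q ^ n \<le> ((\<Sum>v\<in>words q (Suc n). (cmod (\<chi>' (Suc n) v))\<^sup>2) / Q) / Q ^ n"
      using Qn_pos[of n] by (intro divide_right_mono) auto
    thus ?thesis by (simp add: L_def' field_simps)
  qed
  have lim: "L \<chi>' \<longlonglongrightarrow> 0" by (rule summable_LIMSEQ_zero[OF H_summable[OF cH]])
  have z: "L \<chi>' n = 0" for n
  proof -
    have "L \<chi>' n \<le> 0"
    proof (rule LIMSEQ_le_const[OF lim])
      show "\<exists>N. \<forall>m\<ge>N. L \<chi>' n \<le> L \<chi>' m"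
        using mono by (intro exI[of _ n]) (auto intro: lift_Suc_mono_le[of "L \<chi>'"])
    qed
    thus ?thesis using L_nonneg[of \<chi>' n] by simp
  qed
  hence "N2 \<chi>' = 0" by (simp add: N2_def)
  thus ?thesis by (rule H_zero_iff[OF cH])
qed

lemma Dop_inj: "inj_on (Dop p e f) (domD p e f)"
proof (rule inj_onI)
  fix x y assume x: "x \<in> domD p e f" and y: "y \<in> domD p e f" and eq: "Dop p e f x = Dop p e f y"
  have "x - y \<in> H" using x y by (intro H_diff) (auto simp: domD_def)
  moreover have "Dop p e f (x - y) = (\<lambda>n w. 0)" by (simp add: Dop_diff eq fun_eq_iff)
  ultimately have "x - y = (\<lambda>n w. 0)" by (rule Dop_kernel)
  thus "x = y" by (simp add: fun_eq_iff)
qed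

lemma Top_dom: "\<psi> \<in> H \<Longrightarrow> Top \<psi> \<in> domD p e f"
  by (simp add: domD_def Top_H Dop_Top)

lemma Dop_bij: "bij_betw (Dop p e f) (domD p e f) H"
proof (rule bij_betw_imageI[OF Dop_inj])
  show "Dop p e f ` domD p e f = H"
  proof
    show "Dop p e f ` domD p e f \<subseteq> H" by (auto simp: domD_def)
    show "H \<subseteq> Dop p e f ` domD p e f"
    proof
      fix \<psi> assume "\<psi> \<in> H"
      thus "\<psi> \<in> Dop p e f ` domD p e f" using Top_dom Dop_Top by (metis image_eqI)
    qed
  qed
qed

lemma inv_Top: "\<psi> \<in> H \<Longrightarrow> the_inv_into (domD p e f) (Dop p e f) \<psi> = Top \<psi>"
  by (intro the_inv_into_f_eq Dop_inj Dop_Top Top_dom)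

lemma bounded_inv: "bounded_op p f (the_inv_into (domD p e f) (Dop p e f))"
  unfolding bounded_op_def
proof (intro conjI ballI exI)
  fix \<psi> assume a: "\<psi> \<in> H"
  show "the_inv_into (domD p e f) (Dop p e f) \<psi> \<in> H" using a by (simp add: inv_Top Top_H)
  have "Hnorm p f (Top \<psi>) = sqrt (N2 (Top \<psi>))" by (simp add: Hnorm_N2)
  also have "\<dots> \<le> sqrt (CT * N2 \<psi>)" using Top_N2[OF a] by simp
  also have "\<dots> = sqrt CT * Hnorm p f \<psi>" by (simp add: Hnorm_N2 real_sqrt_mult)
  finally show "Hnorm p f (the_inv_into (domD p e f) (Dop p e f) \<psi>) \<le> sqrt CT * Hnorm p f \<psi>"
    using a by (simp add: inv_Top)
qed

end



lemma diag_subseq: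
  fixes X :: "nat \<Rightarrow> nat \<Rightarrow> nat list \<Rightarrow> complex"
  assumes bnd: "\<And>n w. \<exists>C. \<forall>k. cmod (X k n w) \<le> C"
  shows "\<exists>R. strict_mono R \<and> (\<forall>n w. convergent (\<lambda>k. X (R k) n w))"
proof -
  define P where "P i s = convergent (\<lambda>k. X (s k) (fst (from_nat i :: nat \<times> nat list)) (snd (from_nat i :: nat \<times> nat list)))"
    for i and s :: "nat \<Rightarrow> nat"
  interpret D: subseqs P
  proof
    fix i and s :: "nat \<Rightarrow> nat" assume "strict_mono s"
    define n where "n = fst (from_nat i :: nat \<times> nat list)"
    define w where "w = snd (from_nat i :: nat \<times> nat list)"
    obtain C where C: "\<forall>k. cmod (X k n w) \<le> C" using bnd by blast
    have "bounded (range (\<lambda>k. X (s k) n w))" unfolding bounded_iff using C by blast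
    then obtain l r' where r': "strict_mono r'" and l: "((\<lambda>k. X (s k) n w) \<circ> r') \<longlonglongrightarrow> l"
      using bounded_imp_convergent_subsequence by blast
    have "P i (s \<circ> r')" unfolding P_def n_def[symmetric] w_def[symmetric] convergent_def
      using l by (auto simp: o_def)
    thus "\<exists>r'. strict_mono r' \<and> P i (s \<circ> r')" using r' by blast
  qed
  have "convergent (\<lambda>k. X (D.diagseq k) n w)" for n w
  proof -
    define i where "i = to_nat (n, w)"
    have "P i (D.diagseq \<circ> (+) (Suc i))"
    proof (rule D.diagseq_holds)
      fix r s i' assume "strict_mono (r :: nat \<Rightarrow> nat)" "P i' s"
      thus "P i' (s \<circ> r)" unfolding P_def
        using convergent_subseq_convergent[of "\<lambda>k. X (s k) _ _" r] by (simp add: o_def)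
    qed
    hence "convergent (\<lambda>k. X (D.diagseq (k + Suc i)) n w)"
      by (simp add: P_def i_def o_def add.commute)
    then obtain l where "(\<lambda>k. X (D.diagseq (k + Suc i)) n w) \<longlonglongrightarrow> l" by (auto simp: convergent_def)
    hence "(\<lambda>k. X (D.diagseq k) n w) \<longlonglongrightarrow> l" by (rule LIMSEQ_offset)
    thus ?thesis by (auto simp: convergent_def)
  qed
  thus ?thesis using D.subseq_diagseq by blast
qed

context tree begin

lemma L_diff_le: "L (x - y) n \<le> 2 * L x n + 2 * L y n"
proof -
  have "(\<Sum>w\<in>words q n. (cmod (x n w - y n w))\<^sup>2) \<le>
      (\<Sum>w\<in>words q n. 2 * (cmod (x n w))\<^sup>2 + 2 * (cmod (y n w))\<^sup>2)"
    by (intro sum_mono cmod_diff_sq)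
  also have "\<dots> = 2 * (\<Sum>w\<in>words q n. (cmod (x n w))\<^sup>2) + 2 * (\<Sum>w\<in>words q n. (cmod (y n w))\<^sup>2)"
    by (simp add: sum.distrib sum_distrib_left)
  finally have "(\<Sum>w\<in>words q n. (cmod (x n w - y n w))\<^sup>2) / Q ^ n \<le> (2 * (\<Sum>w\<in>words q n. (cmod (x n w))\<^sup>2) + 2 * (\<Sum>w\<in>words q n. (cmod (y n w))\<^sup>2)) / Q ^ n"
    by (rule divide_right_mono) (simp add: Qn_pos less_imp_le)
  thus ?thesis by (simp add: L_def' add_divide_distrib)
qed

lemma compact_inv: "compact_op p f (the_inv_into (domD p e f) (Dop p e f))"
  unfolding compact_op_def
proof (intro allI impI)
  fix \<psi> :: "nat \<Rightarrow> tvec"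
  assume \<psi>H: "\<forall>k. \<psi> k \<in> H" and "\<exists>B. \<forall>k. Hnorm p f (\<psi> k) \<le> B"
  then obtain B where B: "\<And>k. Hnorm p f (\<psi> k) \<le> B" by blast
  define M where "M = B\<^sup>2"
  have NM: "N2 (\<psi> k) \<le> M" for k
  proof -
    have "0 \<le> Hnorm p f (\<psi> k)" using N2_nonneg[of "\<psi> k"] \<psi>H by (simp add: Hnorm_N2)
    hence "(Hnorm p f (\<psi> k))\<^sup>2 \<le> B\<^sup>2" using B[of k] by (intro power_mono) auto
    thus ?thesis using Hnorm_sq[OF \<psi>H[rule_format, of k]] by (simp add: M_def)
  qed
  have M0: "M \<ge> 0" by (simp add: M_def)
  define x where "x k = Top (\<psi> k)" for k
  have xH: "x k \<in> H" for k using \<psi>H by (simp add: x_def Top_H)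
  have inv: "the_inv_into (domD p e f) (Dop p e f) (\<psi> k) = x k" for k
    using \<psi>H by (simp add: x_def inv_Top)
  have xL: "L (x k) n \<le> r ^ (2 * n) * S\<^sup>2 * M" for k n
  proof -
    have "L (x k) n \<le> r ^ (2 * n) * S\<^sup>2 * N2 (\<psi> k)" unfolding x_def using \<psi>H by (intro Top_level) auto
    also have "\<dots> \<le> r ^ (2 * n) * S\<^sup>2 * M" using NM[of k] r_pos by (intro mult_left_mono) auto
    finally show ?thesis .
  qed
  have bnd: "\<exists>C. \<forall>k. cmod (x k n w) \<le> C" for n w
  proof (intro exI allI)
    fix k
    show "cmod (x k n w) \<le> sqrt (Q ^ n * (r ^ (2 * n) * S\<^sup>2 * M))"
    proof (cases "w \<in> words q n")
      case True
      have "(cmod (x k n w))\<^sup>2 \<le> Q ^ n * L (x k) n" by (rule coord_le_L[OF True])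
      also have "\<dots> \<le> Q ^ n * (r ^ (2 * n) * S\<^sup>2 * M)" using xL Qn_pos[of n] by (intro mult_left_mono) auto
      finally show ?thesis by (simp add: real_le_rsqrt)
    next
      case False thus ?thesis using H_vanish[OF xH False] r_pos M0 Qn_pos[of n] by simp
    qed
  qed
  obtain R where R: "strict_mono R" and cv: "\<And>n w. convergent (\<lambda>k. x (R k) n w)"
    using diag_subseq[of x, OF bnd] by blast
  define \<phi> where "\<phi> n w = lim (\<lambda>k. x (R k) n w)" for n w
  have pt: "(\<lambda>k. x (R k) n w) \<longlonglongrightarrow> \<phi> n w" for n w
    using cv[of n w] by (simp add: \<phi>_def convergent_LIMSEQ_iff)
  have \<phi>van: "\<phi> n w = 0" if "w \<notin> words q n" for n w
  proof -
    have "(\<lambda>k. x (R k) n w) = (\<lambda>k. 0)" using H_vanish[OF xH that] by simp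
    thus ?thesis using pt[of n w] by (simp add: LIMSEQ_const_iff)
  qed
  have \<phi>L: "L \<phi> n \<le> r ^ (2 * n) * S\<^sup>2 * M" for n
  proof (rule LIMSEQ_le_const2)
    show "(\<lambda>k. L (x (R k)) n) \<longlonglongrightarrow> L \<phi> n" by (intro tends_L pt)
    show "\<exists>N. \<forall>k\<ge>N. L (x (R k)) n \<le> r ^ (2 * n) * S\<^sup>2 * M" using xL by blast
  qed
  have geo: "summable (\<lambda>n. r ^ (2 * n) * (S\<^sup>2 * M))"
    using r2_sums by (intro summable_mult2) (rule sums_summable)
  have \<phi>H: "\<phi> \<in> H"
  proof -
    have "summable (L \<phi>)"
      by (rule summable_comparison_test[OF _ geo]) (use \<phi>L L_nonneg in \<open>auto simp: mult.assoc\<close>)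
    thus ?thesis using \<phi>van by (simp add: H_iff)
  qed
  define d where "d k = x (R k) - \<phi>" for k
  have dH: "d k \<in> H" for k unfolding d_def by (intro H_diff xH \<phi>H)
  have dL: "L (d k) n \<le> r ^ (2 * n) * (4 * S\<^sup>2 * M)" for k n
    using L_diff_le[of "x (R k)" \<phi> n] xL[of "R k" n] \<phi>L[of n] by (simp add: d_def algebra_simps)
  have geo4: "(\<lambda>n. r ^ (2 * n) * (4 * S\<^sup>2 * M)) sums (1 / (1 - r\<^sup>2) * (4 * S\<^sup>2 * M))"
    by (intro sums_mult2 r2_sums)
  have tail: "(\<Sum>n. L (d k) (n + N)) \<le> r ^ (2 * N) * (1 / (1 - r\<^sup>2) * (4 * S\<^sup>2 * M))" for k N
  proof -
    have s: "(\<lambda>n. r ^ (2 * N) * (r ^ (2 * n) * (4 * S\<^sup>2 * M))) sums (r ^ (2 * N) * (1 / (1 - r\<^sup>2) * (4 * S\<^sup>2 * M)))"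
      by (intro sums_mult geo4)
    have "(\<Sum>n. L (d k) (n + N)) \<le> (\<Sum>n. r ^ (2 * N) * (r ^ (2 * n) * (4 * S\<^sup>2 * M)))"
    proof (rule suminf_le)
      fix n show "L (d k) (n + N) \<le> r ^ (2 * N) * (r ^ (2 * n) * (4 * S\<^sup>2 * M))"
        using dL[of k "n + N"] by (simp add: power_add add_mult_distrib2 mult_ac)
      show "summable (\<lambda>n. L (d k) (n + N))"
        using H_summable[OF dH] by (rule summable_ignore_initial_segment)
      show "summable (\<lambda>n. r ^ (2 * N) * (r ^ (2 * n) * (4 * S\<^sup>2 * M)))" using sums_summable[OF s] .
    qed
    thus ?thesis using sums_unique[OF s] by simp
  qed
  define Ct where "Ct = 1 / (1 - r\<^sup>2) * (4 * S\<^sup>2 * M)"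
  have Ct0: "Ct \<ge> 0" using r_pos r_lt1 M0 by (simp add: Ct_def abs_square_less_1 less_imp_le)
  have fin: "(\<lambda>k. \<Sum>n<N. L (d k) n) \<longlonglongrightarrow> 0" for N
  proof -
    have "(\<lambda>k. \<Sum>n<N. L (d k) n) \<longlonglongrightarrow> (\<Sum>n<N. L (\<lambda>n w. 0) n)"
      by (intro tendsto_sum tends_L) (use pt in \<open>auto simp: d_def intro: LIM_zero\<close>)
    thus ?thesis by simp
  qed
  have N2d: "(\<lambda>k. N2 (d k)) \<longlonglongrightarrow> 0"
  proof (rule LIMSEQ_I)
    fix \<epsilon> :: real assume e: "\<epsilon> > 0"
    have "(\<lambda>N. r ^ (2 * N) * Ct) \<longlonglongrightarrow> 0 * Ct"
      using r_pos r_lt1 by (intro tendsto_mult_right) (simp add: power_mult LIMSEQ_power_zero abs_square_less_1)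
    then obtain N where N: "r ^ (2 * N) * Ct < \<epsilon> / 2"
      using e by (auto dest!: order_tendstoD(2)[of _ _ _ "\<epsilon> / 2"] simp: eventually_sequentially) blast
    obtain K where K: "\<And>k. k \<ge> K \<Longrightarrow> norm ((\<Sum>n<N. L (d k) n) - 0) < \<epsilon> / 2"
      using LIMSEQ_D[OF fin[of N], of "\<epsilon> / 2"] e by auto
    show "\<exists>no. \<forall>k\<ge>no. norm (N2 (d k) - 0) < \<epsilon>"
    proof (intro exI[of _ K] allI impI)
      fix k assume k: "k \<ge> K"
      have "N2 (d k) = (\<Sum>n. L (d k) (n + N)) + (\<Sum>n<N. L (d k) n)"
        unfolding N2_def by (rule suminf_split_initial_segment[OF H_summable[OF dH]])
      also have "\<dots> < \<epsilon> / 2 + \<epsilon> / 2" using tail[of k N] N K[OF k] by (simp add: Ct_def)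
      finally show "norm (N2 (d k) - 0) < \<epsilon>" using N2_nonneg[OF dH] by simp
    qed
  qed
  have "(\<lambda>k. Hnorm p f (x (R k) - \<phi>)) \<longlonglongrightarrow> 0"
    using tendsto_real_sqrt[OF N2d] by (simp add: Hnorm_N2 d_def)
  thus "\<exists>R \<phi>. strict_mono R \<and> \<phi> \<in> H \<and>
          (\<lambda>k. Hnorm p f (the_inv_into (domD p e f) (Dop p e f) (\<psi> (R k)) - \<phi>)) \<longlonglongrightarrow> 0"
    using R \<phi>H by (auto simp: inv)
qed

end



context tree begin

definition dl :: "nat \<Rightarrow> nat list \<Rightarrow> tvec" where
  "dl k w = (\<lambda>n v. if n = k \<and> v = w then of_real (sqrt (Q ^ k)) else 0)"

lemma sqQ: "sqrt (Q ^ k) * sqrt (Q ^ k) = Q ^ k" using Qn_pos[of k] by simp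
lemma sqQ_pos: "sqrt (Q ^ k) > 0" using Qn_pos[of k] by simp

lemma div_sq_aux: "c \<noteq> 0 \<Longrightarrow> Z = c * c \<Longrightarrow> x * c / Z = x / (c::complex)"
  by (simp add: field_simps)

lemma It_dl: "w \<in> words q k \<Longrightarrow> It x (dl k w) n = (if n = k then x k w / of_real (sqrt (Q ^ k)) else 0)"
proof -
  assume w: "w \<in> words q k"
  show ?thesis
  proof (cases "n = k")
    case True
    have "(\<Sum>v\<in>words q k. x k v * cnj (dl k w k v)) = (\<Sum>v\<in>words q k. if v = w then x k w * of_real (sqrt (Q ^ k)) else 0)"
      by (intro sum.cong refl) (simp add: dl_def)
    also have "\<dots> = x k w * of_real (sqrt (Q ^ k))" using w by simp
    finally have s: "(\<Sum>v\<in>words q k. x k v * cnj (dl k w k v)) = x k w * of_real (sqrt (Q ^ k))" .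
    have "It x (dl k w) k = x k w * of_real (sqrt (Q ^ k)) / of_real (Q ^ k)"
      by (simp only: It_def s)
    also have "\<dots> = x k w / of_real (sqrt (Q ^ k))"
    proof (rule div_sq_aux)
      show "(of_real (sqrt (Q ^ k)) :: complex) \<noteq> 0" using sqQ_pos[of k] p2 by simp
      show "(of_real (Q ^ k) :: complex) = of_real (sqrt (Q ^ k)) * of_real (sqrt (Q ^ k))"
        by (simp only: of_real_mult[symmetric] sqQ)
    qed
    finally show ?thesis using True by simp
  next
    case False thus ?thesis by (simp add: It_def dl_def)
  qed
qed

lemma inner_dl: "w \<in> words q k \<Longrightarrow> Hinner p f x (dl k w) = x k w / of_real (sqrt (Q ^ k))"
proof -
  assume w: "w \<in> words q k"
  have "Hinner p f x (dl k w) = (\<Sum>n. if n = k then x k w / of_real (sqrt (Q ^ k)) else 0)"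
    using It_dl[OF w] by (simp add: Hinner_It)
  also have "\<dots> = x k w / of_real (sqrt (Q ^ k))"
    using sums_single[of k "\<lambda>_. x k w / of_real (sqrt (Q ^ k))"] by (simp add: sums_iff)
  finally show ?thesis .
qed

lemma cmod_inner_dl: "w \<in> words q k \<Longrightarrow> (cmod (Hinner p f x (dl k w)))\<^sup>2 = (cmod (x k w))\<^sup>2 / Q ^ k"
  using sqQ_pos[of k] Qn_pos[of k]
  by (simp add: inner_dl norm_divide power_divide abs_of_pos)

lemma L_dl: "w \<in> words q k \<Longrightarrow> L (dl k w) n = (if n = k then 1 else 0)"
proof -
  assume w: "w \<in> words q k"
  have "(\<Sum>v\<in>words q n. (cmod (dl k w n v))\<^sup>2) = (\<Sum>v\<in>words q n. if n = k \<and> v = w then Q ^ k else 0)"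
    using Qn_pos[of k] by (intro sum.cong refl) (simp add: dl_def)
  also have "\<dots> = (if n = k then Q ^ k else 0)" using w by (cases "n = k") simp_all
  finally have "(\<Sum>v\<in>words q n. (cmod (dl k w n v))\<^sup>2) = (if n = k then Q ^ k else 0)" .
  thus ?thesis using Qn_pos[of k] p2 by (simp add: L_def')
qed

lemma dl_H: "w \<in> words q k \<Longrightarrow> dl k w \<in> H"
proof -
  assume w: "w \<in> words q k"
  have "L (dl k w) = (\<lambda>n. if n = k then 1 else 0)" using L_dl[OF w] by auto
  hence "summable (L (dl k w))" by simp
  moreover have "\<forall>n v. v \<notin> words q n \<longrightarrow> dl k w n v = 0" using w by (auto simp: dl_def)
  ultimately show ?thesis by (simp add: H_iff)
qed

lemma N2_dl: "w \<in> words q k \<Longrightarrow> N2 (dl k w) = 1"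
proof -
  assume w: "w \<in> words q k"
  have "L (dl k w) = (\<lambda>n. if n = k then 1 else 0)" using L_dl[OF w] by auto
  thus ?thesis unfolding N2_def using sums_single[of k "\<lambda>_. 1::real"] by (simp add: sums_iff)
qed

definition Idx :: "(nat \<times> nat list) set" where "Idx = Sigma UNIV (words q)"
definition B0 :: "tvec set" where "B0 = (\<lambda>(k, w). dl k w) ` Idx"

lemma dl_inj: "inj_on (\<lambda>(k, w). dl k w) Idx"
proof (rule inj_onI)
  fix x y assume x: "x \<in> Idx" and y: "y \<in> Idx" and eq: "(\<lambda>(k, w). dl k w) x = (\<lambda>(k, w). dl k w) y"
  obtain k w where xk: "x = (k, w)" by (cases x)
  obtain k' w' where yk: "y = (k', w')" by (cases y)
  have "dl k w k w = dl k' w' k w" using eq xk yk by simp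
  hence "k = k' \<and> w = w'" using sqQ_pos[of k] p2 by (auto simp: dl_def split: if_splits)
  thus "x = y" using xk yk by simp
qed

lemma B0_onb: "orthonormal_basis p f B0"
  unfolding orthonormal_basis_def
proof (intro conjI ballI impI)
  show "B0 \<subseteq> H" by (auto simp: B0_def Idx_def dl_H)
next
  fix b assume "b \<in> B0"
  then obtain k w where b: "b = dl k w" and w: "w \<in> words q k" by (auto simp: B0_def Idx_def)
  show "Hnorm p f b = 1" by (simp add: b Hnorm_N2 N2_dl[OF w])
next
  fix b c assume bB: "b \<in> B0" and cB: "c \<in> B0" and ne: "b \<noteq> c"
  obtain k w where b: "b = dl k w" and w: "w \<in> words q k" using bB by (auto simp: B0_def Idx_def)
  obtain k' w' where c: "c = dl k' w'" and w': "w' \<in> words q k'" using cB by (auto simp: B0_def Idx_def)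
  have "k \<noteq> k' \<or> w \<noteq> w'" using ne b c by auto
  hence "dl k w k' w' = 0" by (auto simp: dl_def)
  thus "Hinner p f b c = 0" using b c inner_dl[OF w'] by simp
next
  fix \<phi> assume \<phi>H: "\<phi> \<in> H" and orth: "\<forall>b\<in>B0. Hinner p f \<phi> b = 0"
  have "\<phi> n w = 0" for n w
  proof (cases "w \<in> words q n")
    case True
    have "dl n w \<in> B0" using True by (auto simp: B0_def Idx_def)
    hence "\<phi> n w / of_real (sqrt (Q ^ n)) = 0" using orth inner_dl[OF True] by auto
    thus ?thesis using sqQ_pos[of n] p2 by simp
  next
    case False thus ?thesis by (rule H_vanish[OF \<phi>H])
  qed
  thus "\<phi> = (\<lambda>n w. 0)" by (simp add: fun_eq_iff)
qed

end



lemma summable_lin_geo: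
  fixes x :: real
  assumes x0: "x \<ge> 0" and x1: "x < 1"
  shows "summable (\<lambda>k. (real k + 1) * x ^ k)"
proof -
  define y where "y = sqrt x"
  have y0: "y \<ge> 0" and y1: "y < 1" using x0 x1 by (auto simp: y_def)
  have "(\<lambda>k. of_nat k * y ^ k) \<longlonglongrightarrow> (0::real)" using y0 y1 by (intro powser_times_n_limit_0) simp
  moreover have "(\<lambda>k. y ^ k) \<longlonglongrightarrow> (0::real)" using y0 y1 by (intro LIMSEQ_power_zero) simp
  ultimately have "(\<lambda>k. real k * y ^ k + y ^ k) \<longlonglongrightarrow> 0" using tendsto_add by fastforce
  hence "Bseq (\<lambda>k. real k * y ^ k + y ^ k)" by (intro convergent_imp_Bseq) (auto simp: convergent_def)
  then obtain K where K: "\<And>k. norm (real k * y ^ k + y ^ k) \<le> K" by (rule BseqE) blast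
  have "summable (\<lambda>k. K * y ^ k)" using y0 y1 by (intro summable_mult) simp
  thus ?thesis
  proof (rule summable_comparison_test[rotated], intro exI[of _ 0] allI impI)
    fix k :: nat
    have "x ^ k = y ^ k * y ^ k" using x0 by (simp add: y_def power_mult_distrib[symmetric])
    hence "(real k + 1) * x ^ k = (real k * y ^ k + y ^ k) * y ^ k" by (simp add: algebra_simps)
    also have "\<dots> \<le> K * y ^ k" using K[of k] y0 by (intro mult_right_mono) auto
    finally show "norm ((real k + 1) * x ^ k) \<le> K * y ^ k" using x0 by simp
  qed
qed

context tree begin

lemma avg_zero: "(\<And>v. \<psi> m v = 0) \<Longrightarrow> avg j \<psi> m w = 0"
  by (simp add: avg_def)

lemma Top_single_pt:
  assumes single: "\<And>n v. n \<noteq> k \<Longrightarrow> \<psi> n v = 0" and v: "v \<in> words q n"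
  shows "Top \<psi> n v = (if n \<le> k then of_real (r ^ k) * avg (k - n) \<psi> k v else 0)"
proof -
  define g where "g j = of_real (r ^ (n + j)) * avg j \<psi> (n + j) v" for j
  have gz: "g j = 0" if "j \<notin> {k - n}" for j
  proof -
    have "n + j \<noteq> k" using that by auto
    thus ?thesis using single by (simp add: g_def avg_zero)
  qed
  have "Top \<psi> n v = suminf g" using v by (simp add: Top_def g_def[abs_def])
  also have "\<dots> = (\<Sum>j\<in>{k - n}. g j)" by (rule suminf_finite) (use gz in auto)
  also have "\<dots> = g (k - n)" by simp
  also have "\<dots> = (if n \<le> k then of_real (r ^ k) * avg (k - n) \<psi> k v else 0)"
  proof (cases "n \<le> k")
    case True thus ?thesis by (simp add: g_def)
  next
    case False
    hence "n + (k - n) \<noteq> k" by auto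
    thus ?thesis using False single by (simp add: g_def avg_zero)
  qed
  finally show ?thesis .
qed

lemma cmod_r_mult: "(cmod (of_real (r ^ k) * z))\<^sup>2 = r ^ (2 * k) * (cmod z)\<^sup>2"
proof -
  have "cmod (of_real (r ^ k) * z) = r ^ k * cmod z" using r_pos by (simp add: norm_mult norm_power abs_of_pos)
  hence "(cmod (of_real (r ^ k) * z))\<^sup>2 = (r ^ k)\<^sup>2 * (cmod z)\<^sup>2" by (simp add: power_mult_distrib)
  also have "(r ^ k)\<^sup>2 = r ^ (2 * k)" by (simp add: power_mult[symmetric] mult.commute)
  finally show ?thesis .
qed

lemma Top_single_L:
  assumes single: "\<And>n v. n \<noteq> k \<Longrightarrow> \<psi> n v = 0"
  shows "L (Top \<psi>) n \<le> (if n \<le> k then r ^ (2 * k) * L \<psi> k else 0)"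
proof (cases "n \<le> k")
  case True
  have nk: "n + (k - n) = k" using True by simp
  have "(\<Sum>v\<in>words q n. (cmod (Top \<psi> n v))\<^sup>2) = (\<Sum>v\<in>words q n. r ^ (2 * k) * (cmod (avg (k - n) \<psi> k v))\<^sup>2)"
    by (intro sum.cong refl) (simp only: Top_single_pt[OF single] if_P[OF True] cmod_r_mult)
  also have "\<dots> = r ^ (2 * k) * (\<Sum>v\<in>words q n. (cmod (avg (k - n) \<psi> k v))\<^sup>2)"
    by (simp add: sum_distrib_left)
  also have "\<dots> \<le> r ^ (2 * k) * (Q ^ n * L \<psi> k)"
    using r_pos avg_level[where n=n and j="k - n" and \<psi>=\<psi>] unfolding nk by (intro mult_left_mono) auto
  finally have "(\<Sum>v\<in>words q n. (cmod (Top \<psi> n v))\<^sup>2) / Q ^ n \<le> r ^ (2 * k) * (Q ^ n * L \<psi> k) / Q ^ n"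
    using Qn_pos[of n] by (intro divide_right_mono) auto
  thus ?thesis using True Qn_pos[of n] p2 by (simp add: L_def')
next
  case False
  have "(\<Sum>v\<in>words q n. (cmod (Top \<psi> n v))\<^sup>2) = 0"
    using False by (intro sum.neutral) (simp add: Top_single_pt[OF single])
  thus ?thesis using False by (simp add: L_def')
qed

lemma Top_single_N2:
  assumes \<psi>H: "\<psi> \<in> H" and single: "\<And>n v. n \<noteq> k \<Longrightarrow> \<psi> n v = 0"
  shows "N2 (Top \<psi>) \<le> (real k + 1) * r ^ (2 * k) * L \<psi> k"
proof -
  define c where "c = r ^ (2 * k) * L \<psi> k"
  have sc: "summable (\<lambda>n. if n \<le> k then c else 0)" by (rule summable_finite[of "{..k}"]) auto
  have "N2 (Top \<psi>) \<le> (\<Sum>n. if n \<le> k then c else 0)" unfolding N2_def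
  proof (rule suminf_le)
    fix n show "L (Top \<psi>) n \<le> (if n \<le> k then c else 0)"
      using Top_single_L[where \<psi>=\<psi> and k=k and n=n, OF single] by (cases "n \<le> k") (simp_all add: c_def)
  qed (use H_summable[OF Top_H[OF \<psi>H]] sc in auto)
  also have "\<dots> = (\<Sum>n\<in>{..k}. if n \<le> k then c else 0)" by (rule suminf_finite) auto
  also have "\<dots> = (real k + 1) * c" by simp
  finally show ?thesis by (simp add: c_def mult.assoc)
qed

lemma Top_dl_N2: "w \<in> words q k \<Longrightarrow> N2 (Top (dl k w)) \<le> (real k + 1) * r ^ (2 * k)"
proof -
  assume w: "w \<in> words q k"
  have "N2 (Top (dl k w)) \<le> (real k + 1) * r ^ (2 * k) * L (dl k w) k"
    by (rule Top_single_N2[OF dl_H[OF w]]) (simp add: dl_def)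
  thus ?thesis using L_dl[OF w, of k] by simp
qed

lemma hs_if:
  assumes "e = 1" "f = 1"
  shows "hilbert_schmidt p f (the_inv_into (domD p e f) (Dop p e f))"
  unfolding hilbert_schmidt_def
proof (intro exI conjI)
  show "orthonormal_basis p f B0" by (rule B0_onb)
  define g where "g b = (Hnorm p f (the_inv_into (domD p e f) (Dop p e f) b))\<^sup>2" for b
  have "real p powr (1 / real e) = real p" using assms(1) by simp
  hence ap: "a = real p" by (simp add: a_def)
  have rp: "r = inverse (real p)" by (simp add: r_def ap)
  have Qp: "Q = real p" using assms(2) by simp
  have Qr: "Q * r = 1" using p2 by (simp only: Qp rp) simp
  have gdl: "g (dl k w) \<le> (real k + 1) * r ^ (2 * k)" if "w \<in> words q k" for k w
    using that Top_dl_N2[OF that] by (simp add: g_def inv_Top dl_H Hnorm_sq Top_H)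
  have g0: "g b \<ge> 0" for b by (simp add: g_def)
  have "(g \<circ> (\<lambda>(k, w). dl k w)) summable_on Idx"
  proof (rule nonneg_bdd_above_summable_on)
    show "\<And>x. x \<in> Idx \<Longrightarrow> 0 \<le> (g \<circ> (\<lambda>(k, w). dl k w)) x" using g0 by simp
    define Z where "Z = (\<Sum>k. (real k + 1) * r ^ k)"
    have sZ: "summable (\<lambda>k. (real k + 1) * r ^ k)" using r_pos r_lt1 by (intro summable_lin_geo) auto
    show "bdd_above (sum (g \<circ> (\<lambda>(k, w). dl k w)) ` {F. F \<subseteq> Idx \<and> finite F})"
    proof (rule bdd_aboveI[of _ Z])
      fix y assume "y \<in> sum (g \<circ> (\<lambda>(k, w). dl k w)) ` {F. F \<subseteq> Idx \<and> finite F}"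
      then obtain F where FI: "F \<subseteq> Idx" and Ff: "finite F" and yF: "y = sum (g \<circ> (\<lambda>(k, w). dl k w)) F" by auto
      define K where "K = Suc (Max (insert 0 (fst ` F)))"
      have FK: "F \<subseteq> Sigma {..<K} (words q)"
      proof
        fix x assume xF: "x \<in> F"
        have "fst x \<le> Max (insert 0 (fst ` F))" using Ff xF by (intro Max_ge) auto
        thus "x \<in> Sigma {..<K} (words q)" using FI xF by (cases x) (auto simp: K_def Idx_def)
      qed
      have "sum (g \<circ> (\<lambda>(k, w). dl k w)) F \<le> sum (\<lambda>(k, w). (real k + 1) * r ^ (2 * k)) F"
        using FI gdl by (intro sum_mono) (auto simp: Idx_def)
      also have "\<dots> \<le> sum (\<lambda>(k, w). (real k + 1) * r ^ (2 * k)) (Sigma {..<K} (words q))"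
        using FK r_pos by (intro sum_mono2) auto
      also have "\<dots> = (\<Sum>k<K. \<Sum>w\<in>words q k. (real k + 1) * r ^ (2 * k))"
        by (rule sum.Sigma[symmetric]) auto
      also have "\<dots> = (\<Sum>k<K. Q ^ k * ((real k + 1) * r ^ (2 * k)))"
        by (intro sum.cong refl) simp
      also have "\<dots> = (\<Sum>k<K. (real k + 1) * r ^ k)"
      proof (intro sum.cong refl)
        fix k
        have "Q ^ k * r ^ (2 * k) = (Q * r) ^ k * r ^ k" by (simp add: power_mult_distrib power_mult power2_eq_square mult_ac)
        thus "Q ^ k * ((real k + 1) * r ^ (2 * k)) = (real k + 1) * r ^ k" using Qr by (simp add: mult_ac)
      qed
      also have "\<dots> \<le> Z" unfolding Z_def using r_pos by (intro sum_le_suminf sZ) auto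
      finally show "y \<le> Z" using yF by simp
    qed
  qed
  note calculation = this
  show "(\<lambda>b. (Hnorm p f (the_inv_into (domD p e f) (Dop p e f) b))\<^sup>2) summable_on B0"
  proof -
    have "g summable_on B0" unfolding B0_def using summable_on_reindex[OF dl_inj, of g] calculation by blast
    moreover have "g = (\<lambda>b. (Hnorm p f (the_inv_into (domD p e f) (Dop p e f) b))\<^sup>2)" by (simp add: fun_eq_iff g_def)
    ultimately show ?thesis by simp
  qed
qed

end



lemma infsum_finsum:
  fixes \<phi> :: "'i \<Rightarrow> 'b \<Rightarrow> real"
  assumes "finite C" "\<And>i. i \<in> C \<Longrightarrow> \<phi> i summable_on B"
  shows "(\<lambda>b. \<Sum>i\<in>C. \<phi> i b) summable_on B \<and> infsum (\<lambda>b. \<Sum>i\<in>C. \<phi> i b) B = (\<Sum>i\<in>C. infsum (\<phi> i) B)"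
  using assms
proof (induction C rule: finite_induct)
  case empty thus ?case by simp
next
  case (insert x C)
  hence IH: "(\<lambda>b. \<Sum>i\<in>C. \<phi> i b) summable_on B" "infsum (\<lambda>b. \<Sum>i\<in>C. \<phi> i b) B = (\<Sum>i\<in>C. infsum (\<phi> i) B)"
    by auto
  have sx: "\<phi> x summable_on B" using insert by auto
  have "(\<lambda>b. \<phi> x b + (\<Sum>i\<in>C. \<phi> i b)) summable_on B" by (rule summable_on_add[OF sx IH(1)])
  moreover have "infsum (\<lambda>b. \<phi> x b + (\<Sum>i\<in>C. \<phi> i b)) B = infsum (\<phi> x) B + (\<Sum>i\<in>C. infsum (\<phi> i) B)"
    using infsum_add[OF sx IH(1)] IH(2) by simp
  ultimately show ?case using insert by simp
qed

context tree begin

definition hv :: "nat \<Rightarrow> nat list \<Rightarrow> tvec" where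
  "hv k w = (\<lambda>m v. if k \<le> m \<and> v \<in> words q m \<and> take k v = w then of_real (r ^ m * sqrt (Q ^ k)) else 0)"

lemma sum_take_eq:
  assumes w: "w \<in> words q k"
  shows "(\<Sum>v\<in>words q (k + j). if take k v = w then g v else 0) = (\<Sum>u\<in>words q j. g (w @ u))"
proof -
  have "(\<Sum>v\<in>words q (k + j). if take k v = w then g v else 0) =
        (\<Sum>w'\<in>words q k. \<Sum>u\<in>words q j. if take k (w' @ u) = w then g (w' @ u) else 0)"
    by (rule sum_words_append)
  also have "\<dots> = (\<Sum>w'\<in>words q k. if w' = w then (\<Sum>u\<in>words q j. g (w' @ u)) else 0)"
  proof (intro sum.cong refl)
    fix w' assume "w' \<in> words q k"
    hence "length w' = k" by (rule words_length)
    thus "(\<Sum>u\<in>words q j. if take k (w' @ u) = w then g (w' @ u) else 0) =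
          (if w' = w then (\<Sum>u\<in>words q j. g (w' @ u)) else 0)" by auto
  qed
  also have "\<dots> = (\<Sum>u\<in>words q j. g (w @ u))" using w by simp
  finally show ?thesis .
qed

lemma L_hv:
  assumes w: "w \<in> words q k"
  shows "L (hv k w) m = (if k \<le> m then r ^ (2 * m) else 0)"
proof (cases "k \<le> m")
  case True
  then obtain j where m: "m = k + j" using le_Suc_ex by blast
  have "(\<Sum>v\<in>words q m. (cmod (hv k w m v))\<^sup>2) = (\<Sum>v\<in>words q (k + j). if take k v = w then r ^ (2 * m) * Q ^ k else 0)"
  proof (intro sum.cong)
    fix v assume "v \<in> words q (k + j)"
    moreover have "(r ^ m * sqrt (Q ^ k))\<^sup>2 = r ^ (2 * m) * Q ^ k"
      using Qn_pos[of k] by (simp add: power_mult_distrib power_mult[symmetric] mult.commute)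
    moreover have e: "(cmod (complex_of_real y))\<^sup>2 = y\<^sup>2" for y by (simp only: norm_of_real power2_abs)
    ultimately show "(cmod (hv k w m v))\<^sup>2 = (if take k v = w then r ^ (2 * m) * Q ^ k else 0)"
      using True m by (auto simp: hv_def e simp del: of_real_mult of_real_power)
  qed (simp add: m)
  also have "\<dots> = (\<Sum>u\<in>words q j. r ^ (2 * m) * Q ^ k)" by (rule sum_take_eq[OF w])
  also have "\<dots> = Q ^ j * (r ^ (2 * m) * Q ^ k)" by simp
  finally show ?thesis using True Qn_pos[of m] p2 by (simp add: L_def' m power_add field_simps)
next
  case False
  have "(\<Sum>v\<in>words q m. (cmod (hv k w m v))\<^sup>2) = 0" using False by (simp add: hv_def)
  thus ?thesis using False by (simp add: L_def')
qed

lemma hv_H: assumes w: "w \<in> words q k" shows "hv k w \<in> H"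
proof -
  have "summable (L (hv k w))"
  proof (rule summable_comparison_test[OF _ sums_summable[OF r2_sums]])
    show "\<exists>N. \<forall>n\<ge>N. norm (L (hv k w) n) \<le> r ^ (2 * n)"
      using L_hv[OF w] r_pos by (intro exI[of _ 0]) (auto simp: L_nonneg)
  qed
  moreover have "\<forall>n v. v \<notin> words q n \<longrightarrow> hv k w n v = 0" by (simp add: hv_def)
  ultimately show ?thesis by (simp add: H_iff)
qed

lemma N2_hv: "w \<in> words q k \<Longrightarrow> N2 (hv k w) \<ge> r ^ (2 * k)"
  using L_le_N2[OF hv_H, of w k k] L_hv[of w k k] by simp

lemma cdiv_aux: "c \<noteq> 0 \<Longrightarrow> Qj \<noteq> 0 \<Longrightarrow> R * (X / Qj) / c = X * (R * c) / (Qj * (c * c))"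
  for c Qj R X :: complex
  by (simp add: field_simps)

lemma adjoint:
  assumes bH: "b \<in> H" and w: "w \<in> words q k"
  shows "Hinner p f (Top b) (dl k w) = Hinner p f b (hv k w)"
proof -
  define c :: complex where "c = of_real (sqrt (Q ^ k))"
  have c0: "c \<noteq> 0" using sqQ_pos[of k] p2 by (simp add: c_def)
  define X where "X j = (\<Sum>u\<in>words q j. b (k + j) (w @ u))" for j
  have "Hinner p f (Top b) (dl k w) = Top b k w / c" by (simp add: inner_dl[OF w] c_def)
  also have "\<dots> = (\<Sum>j. of_real (r ^ (k + j)) * avg j b (k + j) w) / c" using w by (simp add: Top_def)
  also have "\<dots> = (\<Sum>j. of_real (r ^ (k + j)) * avg j b (k + j) w / c)"
    by (rule suminf_divide[symmetric, OF Top_series(3)[OF bH w]])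
  also have "\<dots> = (\<Sum>j. It b (hv k w) (j + k))"
  proof (intro arg_cong[where f=suminf] ext)
    fix j
    have hvv: "cnj (hv k w (j + k) v) = (if take k v = w then of_real (r ^ (k + j)) * c else 0)"
      if "v \<in> words q (j + k)" for v
      using that by (simp add: hv_def c_def add.commute)
    have "(\<Sum>v\<in>words q (j + k). b (j + k) v * cnj (hv k w (j + k) v)) =
          (\<Sum>v\<in>words q (k + j). if take k v = w then b (k + j) v * (of_real (r ^ (k + j)) * c) else 0)"
      using hvv by (intro sum.cong) (auto simp: add.commute)
    also have "\<dots> = X j * (of_real (r ^ (k + j)) * c)"
      by (simp add: sum_take_eq[OF w] X_def sum_distrib_right)
    finally have num: "(\<Sum>v\<in>words q (j + k). b (j + k) v * cnj (hv k w (j + k) v)) = X j * (of_real (r ^ (k + j)) * c)" .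
    have den: "(of_real (Q ^ (j + k)) :: complex) = of_real (Q ^ j) * (c * c)"
      by (simp only: c_def of_real_mult[symmetric] sqQ power_add)
    have "It b (hv k w) (j + k) = X j * (of_real (r ^ (k + j)) * c) / (of_real (Q ^ j) * (c * c))"
      by (simp only: It_def num den)
    also have "\<dots> = of_real (r ^ (k + j)) * (X j / of_real (Q ^ j)) / c"
      by (rule cdiv_aux[symmetric, OF c0]) (use Qn_pos[of j] p2 in simp)
    also have "\<dots> = of_real (r ^ (k + j)) * avg j b (k + j) w / c"
      by (simp only: avg_def X_def)
    finally show "of_real (r ^ (k + j)) * avg j b (k + j) w / c = It b (hv k w) (j + k)" by simp
  qed
  also have "\<dots> = Hinner p f b (hv k w)"
  proof -
    have z: "It b (hv k w) i = 0" if "i < k" for i using that by (simp add: It_def hv_def)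
    have "Hinner p f b (hv k w) = (\<Sum>j. It b (hv k w) (j + k)) + (\<Sum>i<k. It b (hv k w) i)"
      unfolding Hinner_It by (rule suminf_split_initial_segment[OF It_summable[OF bH hv_H[OF w]]])
    thus ?thesis using z by simp
  qed
  finally show ?thesis .
qed

end



context tree begin

lemma hs_only_if:
  assumes hs: "hilbert_schmidt p f (the_inv_into (domD p e f) (Dop p e f))"
  shows "e = 1 \<and> f = 1"
proof (rule ccontr)
  assume ne: "\<not> (e = 1 \<and> f = 1)"
  have ef: "2 / real e \<le> real f"
  proof (cases "e = 1")
    case True
    hence "f \<ge> 2" using ne f1 by auto
    thus ?thesis using True by simp
  next
    case False
    hence "real e \<ge> 2" using e1 by simp
    hence "2 / real e \<le> 1" by simp
    thus ?thesis using f1 by simp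
  qed
  have a2: "a\<^sup>2 \<le> Q"
  proof -
    have "a\<^sup>2 = real p powr (real 2 / real e)" using powr_n[of 2] by simp
    also have "\<dots> \<le> real p powr (real f)" using ef p2 by (intro powr_mono) auto
    also have "\<dots> = Q" using p2 by (simp add: powr_realpow)
    finally show ?thesis .
  qed
  have Qr2: "Q * r\<^sup>2 \<ge> 1"
  proof -
    have "a\<^sup>2 * r\<^sup>2 = 1" using a_gt1 by (simp add: r_def power_inverse)
    moreover have "a\<^sup>2 * r\<^sup>2 \<le> Q * r\<^sup>2" by (rule mult_right_mono[OF a2]) simp
    ultimately show ?thesis by simp
  qed
  obtain B where B: "orthonormal_basis p f B"
    and sB: "(\<lambda>b. (Hnorm p f (the_inv_into (domD p e f) (Dop p e f) b))\<^sup>2) summable_on B"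
    using hs by (auto simp: hilbert_schmidt_def)
  define G where "G b = (Hnorm p f (the_inv_into (domD p e f) (Dop p e f) b))\<^sup>2" for b
  have sG: "G summable_on B" using sB by (simp add: G_def[abs_def])
  have BH: "B \<subseteq> H" using B by (simp add: orthonormal_basis_def)
  have GN: "G b = N2 (Top b)" if "b \<in> B" for b
    using that BH by (auto simp: G_def inv_Top Hnorm_sq Top_H)
  define \<phi> where "\<phi> i b = (cmod (Hinner p f (hv (fst i) (snd i)) b))\<^sup>2" for i b
  have key: "\<phi> i b = (cmod (Top b (fst i) (snd i)))\<^sup>2 / Q ^ (fst i)" if i: "i \<in> Idx" and b: "b \<in> B" for i b
  proof -
    obtain k w where iw: "i = (k, w)" and w: "w \<in> words q k" using i by (cases i) (auto simp: Idx_def)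
    have bH: "b \<in> H" using b BH by auto
    have "cmod (Hinner p f (hv k w) b) = cmod (Hinner p f b (hv k w))"
      using Hinner_cnj[OF bH hv_H[OF w]] by simp
    also have "\<dots> = cmod (Hinner p f (Top b) (dl k w))" by (simp add: adjoint[OF bH w])
    finally show ?thesis using cmod_inner_dl[OF w, of "Top b"] by (simp add: \<phi>_def iw)
  qed
  have bound: "(\<Sum>i\<in>Sigma {..<K} (words q). \<phi> i b) \<le> G b" if b: "b \<in> B" for K b
  proof -
    have bH: "b \<in> H" using b BH by auto
    have "(\<Sum>i\<in>Sigma {..<K} (words q). \<phi> i b) = (\<Sum>k<K. \<Sum>w\<in>words q k. \<phi> (k, w) b)"
      by (subst sum.Sigma) (auto simp: split_def)
    also have "\<dots> = (\<Sum>k<K. L (Top b) k)"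
    proof (intro sum.cong refl)
      fix k
      have "(\<Sum>w\<in>words q k. \<phi> (k, w) b) = (\<Sum>w\<in>words q k. (cmod (Top b k w))\<^sup>2 / Q ^ k)"
        using b by (intro sum.cong refl) (simp add: key Idx_def)
      thus "(\<Sum>w\<in>words q k. \<phi> (k, w) b) = L (Top b) k" by (simp add: L_def' sum_divide_distrib)
    qed
    also have "\<dots> \<le> N2 (Top b)" by (rule partial_le_N2[OF Top_H[OF bH]])
    finally show ?thesis using GN[OF b] by simp
  qed
  have \<phi>0: "\<phi> i b \<ge> 0" for i b by (simp add: \<phi>_def)
  have single: "\<phi> i b \<le> G b" if i: "i \<in> Idx" and b: "b \<in> B" for i b
  proof -
    have "i \<in> Sigma {..<Suc (fst i)} (words q)" using i by (cases i) (auto simp: Idx_def)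
    hence "\<phi> i b \<le> (\<Sum>i\<in>Sigma {..<Suc (fst i)} (words q). \<phi> i b)"
      by (intro member_le_sum \<phi>0) auto
    thus ?thesis using bound[OF b] by (rule order_trans)
  qed
  have s\<phi>: "\<phi> i summable_on B" if i: "i \<in> Idx" for i
    by (rule summable_on_comparison_test[OF sG]) (use single[OF i] \<phi>0 in auto)
  have pars: "N2 (hv (fst i) (snd i)) \<le> infsum (\<phi> i) B" if i: "i \<in> Idx" for i
  proof -
    obtain k w where iw: "i = (k, w)" and w: "w \<in> words q k" using i by (cases i) (auto simp: Idx_def)
    show ?thesis using parseval_ge[OF B hv_H[OF w]] s\<phi>[OF i] by (simp add: \<phi>_def[abs_def] iw)
  qed
  define Z where "Z = infsum G B"
  have KZ: "real K \<le> Z" for K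
  proof -
    define C where "C = Sigma {..<K} (words q)"
    have CI: "C \<subseteq> Idx" by (auto simp: C_def Idx_def)
    have Cf: "finite C" by (simp add: C_def)
    have fs: "(\<lambda>b. \<Sum>i\<in>C. \<phi> i b) summable_on B \<and> infsum (\<lambda>b. \<Sum>i\<in>C. \<phi> i b) B = (\<Sum>i\<in>C. infsum (\<phi> i) B)"
      by (rule infsum_finsum[OF Cf]) (use s\<phi> CI in auto)
    have "real K = (\<Sum>k<K. 1::real)" by simp
    also have "\<dots> \<le> (\<Sum>k<K. Q ^ k * r ^ (2 * k))"
    proof (intro sum_mono)
      fix k
      have "Q ^ k * r ^ (2 * k) = (Q * r\<^sup>2) ^ k" by (simp add: power_mult_distrib power_mult)
      thus "1 \<le> Q ^ k * r ^ (2 * k)" using Qr2 by (simp add: one_le_power)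
    qed
    also have "\<dots> = (\<Sum>k<K. \<Sum>w\<in>words q k. r ^ (2 * k))" by simp
    also have "\<dots> = (\<Sum>i\<in>C. r ^ (2 * fst i))" unfolding C_def by (subst sum.Sigma) (auto simp: split_def)
    also have "\<dots> \<le> (\<Sum>i\<in>C. N2 (hv (fst i) (snd i)))"
      using CI by (intro sum_mono N2_hv) (auto simp: Idx_def)
    also have "\<dots> \<le> (\<Sum>i\<in>C. infsum (\<phi> i) B)"
      using CI by (intro sum_mono pars) auto
    also have "\<dots> = infsum (\<lambda>b. \<Sum>i\<in>C. \<phi> i b) B"
      using fs by simp
    also have "\<dots> \<le> infsum G B"
    proof (rule infsum_mono)
      show "(\<lambda>b. \<Sum>i\<in>C. \<phi> i b) summable_on B" using fs by simp
      show "G summable_on B" by (rule sG)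
      fix b assume "b \<in> B" thus "(\<Sum>i\<in>C. \<phi> i b) \<le> G b" unfolding C_def by (rule bound)
    qed
    finally show ?thesis by (simp add: Z_def)
  qed
  have "real (nat \<lceil>Z\<rceil> + 1) \<le> Z" by (rule KZ)
  moreover have "real (nat \<lceil>Z\<rceil> + 1) > Z" by linarith
  ultimately show False by simp
qed

end

theorem mainTheorem1:
  fixes p e f :: nat
  assumes "prime p" and "e \<ge> 1" and "f \<ge> 1"
  shows "bij_betw (Dop p e f) (domD p e f) (Hspace p f) \<and>
         bounded_op p f (the_inv_into (domD p e f) (Dop p e f)) \<and>
         compact_op p f (the_inv_into (domD p e f) (Dop p e f)) \<and>
         (hilbert_schmidt p f (the_inv_into (domD p e f) (Dop p e f))
            \<longleftrightarrow> (e = 1 \<and> f = 1))"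
proof -
  interpret tree p e f using assms by unfold_locales
  show ?thesis using Dop_bij bounded_inv compact_inv hs_if hs_only_if by blast
qed


end
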